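(* Let $G$ be a word-representable split graph. Then $\mathcal{R}(G)\le 3$.
   Context: A split graph is a graph whose vertex set can be partitioned into a clique and an independent set. A word over a finite set $X$ is a finite sequence of elements of $X$; two letters $x,y$ alternate in a word $u$ if the subsequence of $u$ consisting of all occurrences of $x$ and $y$ is of the form $xyxy\cdots$ or $yxyx\cdots$ (even or odd length). A graph $G=(V,E)$ is word-representable if there is a word $w$ over $V$ (each vertex occurring) such that for all distinct $a,b\in V$, $ab\in E$ if and only if $a$ and $b$ alternate in $w$; $w$ is then said to represent $G$. A word is $k$-uniform if every letter occurs exactly $k$ times. The representation number $\mathcal{R}(G)$ of a word-representable graph $G$ is the smallest $k$ such that some $k$-uniform word represents $G$. *)

theory Defs
  imports Main
begin

definition simple_graph :: "'a set \<Rightarrow> ('a \<Rightarrow> 'a \<Rightarrow> bool) \<Rightarrow> bool" where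
  "simple_graph V E \<longleftrightarrow> finite V \<and> (\<forall>a b. E a b \<longrightarrow> a \<in> V \<and> b \<in> V) \<and>
     (\<forall>a b. E a b \<longrightarrow> E b a) \<and> (\<forall>a. \<not> E a a)"

definition is_clique :: "('a \<Rightarrow> 'a \<Rightarrow> bool) \<Rightarrow> 'a set \<Rightarrow> bool" where
  "is_clique E K \<longleftrightarrow> (\<forall>a\<in>K. \<forall>b\<in>K. a \<noteq> b \<longrightarrow> E a b)"

definition is_independent :: "('a \<Rightarrow> 'a \<Rightarrow> bool) \<Rightarrow> 'a set \<Rightarrow> bool" where
  "is_independent E I \<longleftrightarrow> (\<forall>a\<in>I. \<forall>b\<in>I. \<not> E a b)"

definition split_graph :: "'a set \<Rightarrow> ('a \<Rightarrow> 'a \<Rightarrow> bool) \<Rightarrow> bool" where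
  "split_graph V E \<longleftrightarrow> (\<exists>K I. K \<union> I = V \<and> K \<inter> I = {} \<and> is_clique E K \<and> is_independent E I)"

definition alternate :: "'a list \<Rightarrow> 'a \<Rightarrow> 'a \<Rightarrow> bool" where
  "alternate w x y \<longleftrightarrow>
     (let u = filter (\<lambda>z. z = x \<or> z = y) w in \<forall>i. Suc i < length u \<longrightarrow> u ! i \<noteq> u ! Suc i)"

definition represents :: "'a list \<Rightarrow> 'a set \<Rightarrow> ('a \<Rightarrow> 'a \<Rightarrow> bool) \<Rightarrow> bool" where
  "represents w V E \<longleftrightarrow> set w = V \<and>
     (\<forall>a\<in>V. \<forall>b\<in>V. a \<noteq> b \<longrightarrow> (E a b \<longleftrightarrow> alternate w a b))"

definition word_representable :: "'a set \<Rightarrow> ('a \<Rightarrow> 'a \<Rightarrow> bool) \<Rightarrow> bool" where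
  "word_representable V E \<longleftrightarrow> (\<exists>w. represents w V E)"

definition uniform :: "nat \<Rightarrow> 'a list \<Rightarrow> bool" where
  "uniform k w \<longleftrightarrow> (\<forall>x\<in>set w. count_list w x = k)"

definition representation_number :: "'a set \<Rightarrow> ('a \<Rightarrow> 'a \<Rightarrow> bool) \<Rightarrow> nat" where
  "representation_number V E = (LEAST k. \<exists>w. uniform k w \<and> represents w V E)"

end

theory Submission
  imports Defs Complex_Main "HOL-Library.Product_Lexorder" "HOL-Library.Multiset"
begin


definition cnt :: "'a list \<Rightarrow> 'a \<Rightarrow> nat \<Rightarrow> nat" where
  "cnt w x i = count_list (take i w) x"

definition bal :: "'a list \<Rightarrow> 'a \<Rightarrow> 'a \<Rightarrow> nat \<Rightarrow> int" where
  "bal w x y i = int (cnt w x i) - int (cnt w y i)"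

definition R1 :: "'a list \<Rightarrow> 'a \<Rightarrow> 'a \<Rightarrow> bool" where
  "R1 w x y \<longleftrightarrow> (\<forall>i<length w. (w!i = x \<longrightarrow> bal w x y i = 0) \<and> (w!i = y \<longrightarrow> bal w x y i = 1))"

definition R2 :: "'a list \<Rightarrow> 'a \<Rightarrow> 'a \<Rightarrow> bool" where
  "R2 w x y \<longleftrightarrow> (\<forall>i<length w. (w!i = x \<longrightarrow> bal w x y i = -1) \<and> (w!i = y \<longrightarrow> bal w x y i = 0))"

lemma succ_nth: "successively (\<noteq>) u \<longleftrightarrow> (\<forall>i. Suc i < length u \<longrightarrow> u ! i \<noteq> u ! Suc i)"
proof (induction u rule: induct_list012)
  case (3 x y xs)
  have "successively (\<noteq>) (x # y # xs) \<longleftrightarrow> x \<noteq> y \<and> successively (\<noteq>) (y # xs)" by simp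
  also have "\<dots> \<longleftrightarrow> (\<forall>i. Suc i < length (x # y # xs) \<longrightarrow> (x # y # xs) ! i \<noteq> (x # y # xs) ! Suc i)"
    unfolding 3(2)
    by (auto simp: nth_Cons split: nat.splits)
  finally show ?case .
qed auto

lemma hd_filter_P: "filter P w \<noteq> [] \<Longrightarrow> P (hd (filter P w))"
  by (induction w) auto

lemma alt_succ: "alternate w x y \<longleftrightarrow> successively (\<noteq>) (filter (\<lambda>z. z = x \<or> z = y) w)"
  unfolding alternate_def Let_def succ_nth by simp

lemma cnt_Cons_0[simp]: "cnt (z#w) x 0 = 0" by (simp add: cnt_def)
lemma cnt_Cons_Suc[simp]: "cnt (z#w) x (Suc i) = (if z = x then 1 else 0) + cnt w x i"
  by (simp add: cnt_def)

lemma bal_Cons_0[simp]: "bal (z#w) x y 0 = 0" by (simp add: bal_def)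
lemma bal_Cons_Suc[simp]: "bal (z#w) x y (Suc i) = (if z = x then 1 else 0) - (if z = y then 1 else 0) + bal w x y i"
  by (simp add: bal_def)

lemma R1_Cons: "x \<noteq> y \<Longrightarrow> R1 (z#w) x y \<longleftrightarrow> (if z = x then R2 w x y else if z = y then False else R1 w x y)"
  unfolding R1_def R2_def by (auto simp add: All_less_Suc2 algebra_simps)

lemma R2_Cons: "x \<noteq> y \<Longrightarrow> R2 (z#w) x y \<longleftrightarrow> (if z = x then False else if z = y then R1 w x y else R2 w x y)"
  unfolding R1_def R2_def by (auto simp add: All_less_Suc2 algebra_simps)

lemma R12_alt:
  assumes "x \<noteq> y"
  shows "(R1 w x y \<longleftrightarrow> alternate w x y \<and> (filter (\<lambda>z. z = x \<or> z = y) w = [] \<or> hd (filter (\<lambda>z. z = x \<or> z = y) w) = x))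
       \<and> (R2 w x y \<longleftrightarrow> alternate w x y \<and> (filter (\<lambda>z. z = x \<or> z = y) w = [] \<or> hd (filter (\<lambda>z. z = x \<or> z = y) w) = y))"
proof (induction w)
  case Nil
  then show ?case by (simp add: R1_def R2_def alt_succ)
next
  case (Cons z w)
  show ?case using Cons assms
    using hd_filter_P[of "\<lambda>z. z = x \<or> z = y" w]
    by (auto simp: R1_Cons R2_Cons alt_succ successively_Cons)
qed

lemma alt_R: "x \<noteq> y \<Longrightarrow> alternate w x y \<longleftrightarrow> R1 w x y \<or> R2 w x y"
proof -
  assume xy: "x \<noteq> y"
  have h: "filter (\<lambda>z. z = x \<or> z = y) w = [] \<or> hd (filter (\<lambda>z. z = x \<or> z = y) w) = x
     \<or> hd (filter (\<lambda>z. z = x \<or> z = y) w) = y"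
    using hd_filter_P[of "\<lambda>z. z = x \<or> z = y" w] by blast
  show ?thesis using R12_alt[OF xy, of w] h by blast
qed


fun fo :: "'a list \<Rightarrow> 'a list" where
  "fo [] = []"
| "fo (a # u) = a # removeAll a (fo u)"

lemma set_fo[simp]: "set (fo u) = set u"
  by (induction u) auto

lemma distinct_fo[simp]: "distinct (fo u)"
  by (induction u) (auto simp: distinct_removeAll)

lemma filter_removeAll: "filter P (removeAll a xs) = removeAll a (filter P xs)"
  by (induction xs) auto

lemma filter_removeAll2: "\<not> P a \<Longrightarrow> filter P (removeAll a xs) = filter P xs"
  by (induction xs) auto

lemma filter_fo: "filter P (fo u) = fo (filter P u)"
  by (induction u) (auto simp: filter_removeAll filter_removeAll2)

lemma hd_fo: "u \<noteq> [] \<Longrightarrow> hd (fo u) = hd u"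
  by (cases u) auto

lemma distinct_succ: "distinct u \<Longrightarrow> successively (\<noteq>) u"
  by (induction u rule: induct_list012) auto

lemma succ_count:
  "successively (\<noteq>) u \<Longrightarrow> set u \<subseteq> {x, y} \<Longrightarrow> u \<noteq> [] \<Longrightarrow> hd u = x \<Longrightarrow> x \<noteq> y \<Longrightarrow>
   count_list u y \<le> count_list u x \<and> count_list u x \<le> count_list u y + 1"
proof (induction u arbitrary: x y)
  case Nil
  then show ?case by simp
next
  case (Cons a u)
  show ?case
  proof (cases u)
    case Nil
    then show ?thesis using Cons by auto
  next
    case (Cons b u')
    have "b = y" using Cons.prems \<open>u = b # u'\<close> by auto
    have "count_list u x \<le> count_list u y \<and> count_list u y \<le> count_list u x + 1"
      using Cons.IH[of y x] Cons.prems \<open>u = b # u'\<close> \<open>b = y\<close> by auto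
    then show ?thesis using Cons.prems by auto
  qed
qed

lemma count_filter_xy: "z = x \<or> z = y \<Longrightarrow> count_list (filter (\<lambda>z. z = x \<or> z = y) w) z = count_list w z"
  by (induction w) auto

lemma count_filter_in: "z \<in> A \<Longrightarrow> count_list (filter (\<lambda>z. z \<in> A) w) z = count_list w z"
  by (induction w) auto

lemma count_filter_notin: "z \<notin> A \<Longrightarrow> count_list (filter (\<lambda>z. z \<in> A) w) z = 0"
  by (induction w) auto

lemma count_distinct: "distinct u \<Longrightarrow> count_list u z = (if z \<in> set u then 1 else 0)"
  by (induction u) auto

lemma distinct_single: "distinct u \<Longrightarrow> set u = {x} \<Longrightarrow> u = [x]"
proof (cases u)
  case (Cons a u')
  assume "distinct u" "set u = {x}"
  then show ?thesis using Cons by (cases u') auto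
qed auto

lemma fo_two:
  assumes "set u = {x, y}" "x \<noteq> y"
  shows "last (fo u) \<noteq> hd (fo u)"
proof -
  have "distinct (fo u)" "set (fo u) = {x,y}" using assms by auto
  then have "length (fo u) = 2" using assms distinct_card by fastforce
  then obtain a b where ab: "fo u = [a, b]"
    by (metis One_nat_def Suc_1 length_0_conv length_Suc_conv)
  then show ?thesis using \<open>distinct (fo u)\<close> by auto
qed

lemma step_alt:
  assumes xy: "x \<noteq> y" and xV: "x \<in> set w" and yV: "y \<in> set w"
    and cntA: "\<And>z z'. z \<in> A \<Longrightarrow> z' \<in> set w \<Longrightarrow> z' \<notin> A \<Longrightarrow> count_list w z < count_list w z'"
  shows "alternate (filter (\<lambda>z. z \<in> A) (fo w) @ w) x y \<longleftrightarrow> alternate w x y"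
proof -
  let ?P = "\<lambda>z. z = x \<or> z = y"
  let ?F = "filter ?P"
  let ?p = "filter (\<lambda>z. z \<in> A) (fo w)"
  have Fp: "?F ?p = filter (\<lambda>z. z \<in> A) (fo (?F w))"
    by (simp add: filter_fo[symmetric] filter_filter conj_commute)
  have Fw_ne: "?F w \<noteq> []" using xV by (metis (mono_tags, lifting) filter_empty_conv)
  have setFw: "set (?F w) = {x, y}" using xV yV by auto
  have dFp: "distinct (?F ?p)" by simp
  show ?thesis
  proof
    assume "alternate (?p @ w) x y"
    then show "alternate w x y" by (simp add: alt_succ successively_append_iff)
  next
    assume alt: "alternate w x y"
    then have sF: "successively (\<noteq>) (?F w)" by (simp add: alt_succ)
    have key: "?F ?p = [] \<or> last (?F ?p) \<noteq> hd (?F w)"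
    proof (cases "x \<in> A")
      case True
      show ?thesis
      proof (cases "y \<in> A")
        case True
        with \<open>x \<in> A\<close> have "filter (\<lambda>z. z \<in> A) (fo (?F w)) = fo (?F w)"
          using setFw by (auto simp: filter_id_conv)
        then show ?thesis using Fp fo_two[OF setFw xy] hd_fo[OF Fw_ne] by auto
      next
        case False
        have c: "count_list w x < count_list w y" using cntA \<open>x \<in> A\<close> yV False by blast
        have "hd (?F w) = y"
        proof (rule ccontr)
          assume "hd (?F w) \<noteq> y"
          then have "hd (?F w) = x" using hd_filter_P[OF Fw_ne] by blast
          then have "count_list (?F w) y \<le> count_list (?F w) x"
            using succ_count[OF sF _ Fw_ne _ xy] setFw by blast
          then show False using c count_filter_xy[of y x y w] count_filter_xy[of x x y w] by simp
        qed
        moreover have "set (?F ?p) = {x}" using Fp setFw \<open>x \<in> A\<close> False by auto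
        then have "?F ?p = [x]" using dFp
          by (intro distinct_single[OF dFp])
        ultimately show ?thesis using xy by auto
      qed
    next
      case False
      show ?thesis
      proof (cases "y \<in> A")
        case True
        have c: "count_list w y < count_list w x" using cntA \<open>y \<in> A\<close> xV False by blast
        have "hd (?F w) = x"
        proof (rule ccontr)
          assume "hd (?F w) \<noteq> x"
          then have "hd (?F w) = y" using hd_filter_P[OF Fw_ne] by blast
          then have "count_list (?F w) x \<le> count_list (?F w) y"
            using succ_count[OF sF _ Fw_ne _ xy[symmetric]] setFw by blast
          then show False using c count_filter_xy[of y x y w] count_filter_xy[of x x y w] by simp
        qed
        moreover have "set (?F ?p) = {y}" using Fp setFw \<open>y \<in> A\<close> False by auto
        then have "?F ?p = [y]" using dFp
          by (intro distinct_single[OF dFp])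
        ultimately show ?thesis using xy by auto
      next
        case False
        then have "set (?F ?p) = {}" using Fp setFw \<open>x \<notin> A\<close> by auto
        then show ?thesis by simp
      qed
    qed
    show "alternate (?p @ w) x y"
      using sF key distinct_succ[OF dFp] by (auto simp: alt_succ successively_append_iff)
  qed
qed


lemma uniformize_aux:
  "\<forall>w. represents w V E \<longrightarrow> (\<forall>z\<in>V. count_list w z \<le> M) \<longrightarrow> (\<Sum>z\<in>V. M - count_list w z) = d
     \<longrightarrow> (\<exists>w'. represents w' V E \<and> (\<forall>z\<in>V. count_list w' z = M))"
proof (induction d rule: less_induct)
  case (less d)
  show ?case
  proof (intro allI impI)
    fix w
    assume rep: "represents w V E" and le: "\<forall>z\<in>V. count_list w z \<le> M"
      and d: "(\<Sum>z\<in>V. M - count_list w z) = d"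
    have sw: "set w = V" using rep by (simp add: represents_def)
    have finV: "finite V" using sw by auto
    define A where "A = {z\<in>V. count_list w z < M}"
    show "\<exists>w'. represents w' V E \<and> (\<forall>z\<in>V. count_list w' z = M)"
    proof (cases "A = {}")
      case True
      have "\<forall>z\<in>V. count_list w z = M"
      proof
        fix z assume "z \<in> V"
        then have "\<not> count_list w z < M" using True unfolding A_def by blast
        then show "count_list w z = M" using le \<open>z \<in> V\<close> by force
      qed
      then show ?thesis using rep by blast
    next
      case False
      define w' where "w' = filter (\<lambda>z. z \<in> A) (fo w) @ w"
      have sw': "set w' = V" using sw by (auto simp: w'_def A_def)
      have cA: "\<And>z z'. z \<in> A \<Longrightarrow> z' \<in> set w \<Longrightarrow> z' \<notin> A \<Longrightarrow> count_list w z < count_list w z'"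
      proof -
        fix z z' assume "z \<in> A" "z' \<in> set w" "z' \<notin> A"
        then have "count_list w z < M" "\<not> count_list w z' < M" using sw unfolding A_def by auto
        then show "count_list w z < count_list w z'" by linarith
      qed
      have alt: "\<And>a b. a \<in> V \<Longrightarrow> b \<in> V \<Longrightarrow> a \<noteq> b \<Longrightarrow> alternate w' a b \<longleftrightarrow> alternate w a b"
      proof -
        fix a b assume "a \<in> V" "b \<in> V" "a \<noteq> b"
        then show "alternate w' a b \<longleftrightarrow> alternate w a b"
          unfolding w'_def using step_alt[of a b w A] cA sw by blast
      qed
      have rep': "represents w' V E" using rep sw' alt by (simp add: represents_def)
      have cnt': "\<And>z. z \<in> V \<Longrightarrow> count_list w' z = count_list w z + (if z \<in> A then 1 else 0)"
      proof -
        fix z assume zV: "z \<in> V"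
        have "count_list (filter (\<lambda>z. z \<in> A) (fo w)) z = (if z \<in> A then 1 else 0)"
          using count_filter_in[of z A "fo w"] count_filter_notin[of z A "fo w"] count_distinct[of "fo w" z] zV sw
          by auto
        then show "count_list w' z = count_list w z + (if z \<in> A then 1 else 0)"
          unfolding w'_def by simp
      qed
      have le': "\<forall>z\<in>V. count_list w' z \<le> M" using cnt' le unfolding A_def by auto
      have dlt: "(\<Sum>z\<in>V. M - count_list w' z) < d"
      proof -
        obtain a where aA: "a \<in> A" using False by auto
        have "\<forall>z\<in>V. M - count_list w' z \<le> M - count_list w z" using cnt' by auto
        moreover have "M - count_list w' a < M - count_list w a" using cnt' aA unfolding A_def by auto
        moreover have "a \<in> V" using aA A_def by auto
        ultimately have "(\<Sum>z\<in>V. M - count_list w' z) < (\<Sum>z\<in>V. M - count_list w z)"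
          by (intro sum_strict_mono_ex1[OF finV]) auto
        then show ?thesis using d by simp
      qed
      show ?thesis by (rule less.IH[OF dlt, rule_format, OF rep' _ refl]) (use le' in blast)
    qed
  qed
qed

lemma uniformize:
  assumes "represents w V E"
  shows "\<exists>w'. represents w' V E \<and> (\<forall>z\<in>V. count_list w' z = length w)"
  by (rule uniformize_aux[of V E "length w", rule_format, OF assms _ refl]) (simp add: count_le_length)


lemma cnt_Suc: "i < length w \<Longrightarrow> cnt w x (Suc i) = cnt w x i + (if w ! i = x then 1 else 0)"
  by (simp add: cnt_def take_Suc_conv_app_nth)

lemma cnt_mono: "i \<le> i' \<Longrightarrow> cnt w x i \<le> cnt w x i'"
proof -
  assume "i \<le> i'"
  then obtain d where "i' = i + d" using le_Suc_ex by blast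
  then have "take i' w = take i w @ take d (drop i w)" by (simp add: take_add)
  then show ?thesis by (simp add: cnt_def)
qed

lemma cnt_le_count: "cnt w x i \<le> count_list w x"
proof -
  have "count_list w x = count_list (take i w @ drop i w) x" by simp
  then show ?thesis unfolding cnt_def by (simp only: count_list_append)
qed

lemma cnt_full: "cnt w x (length w) = count_list w x"
  by (simp add: cnt_def)

lemma cnt_occ_lt: "i < length w \<Longrightarrow> w ! i = x \<Longrightarrow> cnt w x i < count_list w x"
  using cnt_Suc[of i w x] cnt_le_count[of w x "Suc i"] by simp

lemma cnt_less_imp_less: "cnt w x i < cnt w x i' \<Longrightarrow> i < i'"
  using cnt_mono[of i' i w x] by (cases "i' \<le> i") auto

lemma occ_less_cnt: "i < i' \<Longrightarrow> i < length w \<Longrightarrow> w ! i = x \<Longrightarrow> cnt w x i < cnt w x i'"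
  using cnt_Suc[of i w x] cnt_mono[of "Suc i" i' w x] by simp

lemma cnt_exists: "t < count_list w x \<Longrightarrow> \<exists>i<length w. w ! i = x \<and> cnt w x i = t"
proof (induction w arbitrary: t)
  case Nil
  then show ?case by simp
next
  case (Cons a w)
  show ?case
  proof (cases "a = x")
    case True
    show ?thesis
    proof (cases t)
      case 0
      then show ?thesis using True by (intro exI[of _ 0]) simp
    next
      case (Suc t')
      then have "t' < count_list w x" using Cons.prems True by simp
      then obtain i where "i < length w" "w ! i = x" "cnt w x i = t'" using Cons.IH by blast
      then show ?thesis using True Suc by (intro exI[of _ "Suc i"]) simp
    qed
  next
    case False
    then have "t < count_list w x" using Cons.prems by simp
    then obtain i where "i < length w" "w ! i = x" "cnt w x i = t" using Cons.IH by blast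
    then show ?thesis using False by (intro exI[of _ "Suc i"]) simp
  qed
qed

definition kap :: "'a list \<Rightarrow> 'a set \<Rightarrow> nat \<Rightarrow> nat" where
  "kap w K i = length (filter (\<lambda>z. z \<in> K) (take i w))"

lemma kap_Suc: "i < length w \<Longrightarrow> kap w K (Suc i) = kap w K i + (if w ! i \<in> K then 1 else 0)"
  by (simp add: kap_def take_Suc_conv_app_nth)

lemma kap_mono: "i \<le> i' \<Longrightarrow> kap w K i \<le> kap w K i'"
proof -
  assume "i \<le> i'"
  then obtain d where "i' = i + d" using le_Suc_ex by blast
  then have "take i' w = take i w @ take d (drop i w)" by (simp add: take_add)
  then show ?thesis by (simp add: kap_def)
qed

lemma kap_sum: "finite K \<Longrightarrow> kap w K i = (\<Sum>k\<in>K. cnt w k i)"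
proof -
  assume fK: "finite K"
  have "length (filter (\<lambda>z. z \<in> K) (take i w)) = (\<Sum>k\<in>K. count_list (filter (\<lambda>z. z \<in> K) (take i w)) k)"
    using sum_count_set[of "filter (\<lambda>z. z \<in> K) (take i w)" K] fK by fastforce
  also have "\<dots> = (\<Sum>k\<in>K. cnt w k i)"
    by (rule sum.cong) (auto simp: cnt_def count_filter_in)
  finally show ?thesis by (simp add: kap_def)
qed


locale UW =
  fixes w :: "'a list" and V :: "'a set" and E :: "'a \<Rightarrow> 'a \<Rightarrow> bool" and K I :: "'a set" and m :: nat
  assumes rep: "represents w V E"
    and unif: "\<forall>z\<in>V. count_list w z = m"
    and sg: "simple_graph V E"
    and KI: "K \<union> I = V" "K \<inter> I = {}"
    and cl: "is_clique E K" and ind: "is_independent E I"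
    and Kne: "K \<noteq> {}"
begin

abbreviation "L \<equiv> length w"
abbreviation "n \<equiv> card K"

definition fr :: "nat \<Rightarrow> real" where
  "fr i = real (Suc i) / real (2*L+2) + (if kap w K i = 0 then 1/2 else 0)"

definition pos :: "nat \<Rightarrow> real" where
  "pos i = (if w ! i \<in> K then real (kap w K i) else real (kap w K i) - 1 + fr i)"

definition hv :: "nat \<Rightarrow> real" where
  "hv i = pos i - real n * real (cnt w (w ! i) i)"

lemma setw: "set w = V" using rep by (simp add: represents_def)
lemma finV: "finite V" using setw by auto
lemma finK: "finite K" using finV KI by auto
lemma n_pos: "n \<ge> 1" using finK Kne by (simp add: Suc_leI card_gt_0_iff)

lemma m_pos: "m \<ge> 1"
proof -
  obtain k where "k \<in> K" using Kne by auto
  then have "k \<in> set w" using setw KI by auto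
  then have "count_list w k \<ge> 1" using count_list_0_iff[of w k] by (cases "count_list w k") auto
  then show ?thesis using unif \<open>k \<in> set w\<close> setw by auto
qed

lemma occV: "i < L \<Longrightarrow> w ! i \<in> V" using setw nth_mem by blast

lemma kapL: "kap w K L = n * m"
proof -
  have "kap w K L = (\<Sum>k\<in>K. cnt w k L)" by (rule kap_sum[OF finK])
  also have "\<dots> = (\<Sum>k\<in>K. m)" using unif KI by (intro sum.cong) (auto simp: cnt_full)
  finally show ?thesis by simp
qed

lemma kap_le: "kap w K i \<le> n * m"
  using kap_mono[of i L w K] kapL by (cases "i \<le> L") (auto simp: kap_def)

lemma kap_K_lt: "i < L \<Longrightarrow> w ! i \<in> K \<Longrightarrow> kap w K i + 1 \<le> n * m"
  using kap_Suc[of i w K] kap_le[of "Suc i"] by simp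

lemma fr_bounds: "i < L \<Longrightarrow> 0 < fr i \<and> fr i < 1 \<and> (kap w K i = 0 \<longrightarrow> fr i > 1/2) \<and> (kap w K i \<noteq> 0 \<longrightarrow> fr i < 1/2)"
proof -
  assume iL: "i < L"
  have a: "real (Suc i) / real (2*L+2) < 1/2"
    using iL by (simp add: divide_less_eq)
  have b: "real (Suc i) / real (2*L+2) > 0" by simp
  define q where "q = real (Suc i) / real (2*L+2)"
  have "fr i = q + (if kap w K i = 0 then 1/2 else 0)" unfolding fr_def q_def by simp
  then show ?thesis using a b unfolding q_def[symmetric] by auto
qed

lemma fr_inj: "i < L \<Longrightarrow> i' < L \<Longrightarrow> fr i = fr i' \<Longrightarrow> i = i'"
proof -
  assume iL: "i < L" and i'L: "i' < L" and eq: "fr i = fr i'"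
  have s: "(kap w K i = 0) = (kap w K i' = 0)"
    using fr_bounds[OF iL] fr_bounds[OF i'L] eq by force
  then have "real (Suc i) / real (2*L+2) = real (Suc i') / real (2*L+2)"
    using eq unfolding fr_def by (auto split: if_splits)
  then have "real (Suc i) = real (Suc i')" by (simp add: divide_cancel_right)
  then show "i = i'" by simp
qed

lemma pos_step: "Suc i < L \<Longrightarrow> pos i < pos (Suc i)"
proof -
  assume SL: "Suc i < L"
  then have iL: "i < L" by simp
  have ks: "kap w K (Suc i) = kap w K i + (if w ! i \<in> K then 1 else 0)" using kap_Suc[OF iL] .
  note f1 = fr_bounds[OF iL] and f2 = fr_bounds[OF SL]
  show ?thesis
  proof (cases "w ! i \<in> K")
    case True
    then show ?thesis using ks f2 unfolding pos_def by auto
  next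
    case False
    then have ks': "kap w K (Suc i) = kap w K i" using ks by simp
    show ?thesis
    proof (cases "w ! Suc i \<in> K")
      case True
      have "fr i < 1" using f1 by simp
      moreover have "kap w K i = 0 \<Longrightarrow> fr i < 1" using f1 by simp
      ultimately show ?thesis using False True ks' unfolding pos_def by auto
    next
      case F2: False
      have "fr i < fr (Suc i)" unfolding fr_def using ks' by (auto simp: divide_strict_right_mono)
      then show ?thesis using False F2 ks' unfolding pos_def by auto
    qed
  qed
qed

lemma pos_mono: "i < i' \<Longrightarrow> i' < L \<Longrightarrow> pos i < pos i'"
proof (induction i' arbitrary: i)
  case 0
  then show ?case by simp
next
  case (Suc i')
  show ?case
  proof (cases "i = i'")
    case True
    then show ?thesis using pos_step Suc.prems by simp
  next
    case False
    then have "pos i < pos i'" using Suc by simp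
    also have "pos i' < pos (Suc i')" using pos_step Suc.prems by simp
    finally show ?thesis .
  qed
qed

lemma pos_less_iff: "i < L \<Longrightarrow> i' < L \<Longrightarrow> pos i < pos i' \<longleftrightarrow> i < i'"
  using pos_mono[of i i'] pos_mono[of i' i] by (cases "i < i'"; cases "i = i'") auto

lemma pos_bounds: "i < L \<Longrightarrow> -1/2 < pos i \<and> pos i < real (n*m) - 1/2"
proof -
  assume iL: "i < L"
  note f = fr_bounds[OF iL]
  show ?thesis
  proof (cases "w ! i \<in> K")
    case True
    have "real (kap w K i) + 1 \<le> real (n*m)" using kap_K_lt[OF iL True] by linarith
    then show ?thesis using True unfolding pos_def by auto
  next
    case False
    have le: "real (kap w K i) \<le> real (n*m)" using kap_le[of i] by linarith
    have "n * m \<ge> 1" using n_pos m_pos by (simp add: Suc_le_eq)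
    then have nm: "real (n*m) \<ge> 1" by linarith
    show ?thesis
    proof (cases "kap w K i = 0")
      case True
      then show ?thesis using False f nm unfolding pos_def by auto
    next
      case F2: False
      then have "real (kap w K i) \<ge> 1" by simp
      then show ?thesis using False F2 f le unfolding pos_def by auto
    qed
  qed
qed


lemma E_alt: "a \<in> V \<Longrightarrow> b \<in> V \<Longrightarrow> a \<noteq> b \<Longrightarrow> E a b \<longleftrightarrow> alternate w a b"
  using rep by (simp add: represents_def)

lemma alt_K: "k \<in> K \<Longrightarrow> k' \<in> K \<Longrightarrow> k \<noteq> k' \<Longrightarrow> alternate w k k'"
  using E_alt[of k k'] cl KI unfolding is_clique_def by auto

definition dK :: "'a \<Rightarrow> 'a \<Rightarrow> nat" where
  "dK k k' = (if k' = k then 0 else if R1 w k k' then 0 else 1)"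

lemma cnt_K: "k \<in> K \<Longrightarrow> k' \<in> K \<Longrightarrow> i < L \<Longrightarrow> w ! i = k \<Longrightarrow> cnt w k' i = cnt w k i + dK k k'"
proof -
  assume kK: "k \<in> K" and k'K: "k' \<in> K" and iL: "i < L" and wi: "w ! i = k"
  show ?thesis
  proof (cases "k' = k")
    case True
    then show ?thesis by (simp add: dK_def)
  next
    case False
    have "alternate w k k'" using alt_K kK k'K False by simp
    then have "R1 w k k' \<or> R2 w k k'" using alt_R[of k k' w] False by simp
    then show ?thesis
    proof
      assume r: "R1 w k k'"
      then have "bal w k k' i = 0" using iL wi unfolding R1_def by auto
      then show ?thesis using r False by (simp add: dK_def bal_def)
    next
      assume r: "R2 w k k'"
      then have b: "bal w k k' i = -1" using iL wi unfolding R2_def by auto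
      have "\<not> R1 w k k'" using b iL wi unfolding R1_def by auto
      then show ?thesis using b False by (simp add: dK_def bal_def)
    qed
  qed
qed

definition jK :: "'a \<Rightarrow> nat" where
  "jK k = (\<Sum>k'\<in>K. dK k k')"

lemma kap_K: "k \<in> K \<Longrightarrow> i < L \<Longrightarrow> w ! i = k \<Longrightarrow> kap w K i = n * cnt w k i + jK k"
proof -
  assume a: "k \<in> K" "i < L" "w ! i = k"
  have "kap w K i = (\<Sum>k'\<in>K. cnt w k' i)" by (rule kap_sum[OF finK])
  also have "\<dots> = (\<Sum>k'\<in>K. cnt w k i + dK k k')" by (rule sum.cong[OF refl], rule cnt_K[OF a(1) _ a(2,3)])
  also have "\<dots> = n * cnt w k i + jK k" by (simp add: sum.distrib jK_def)
  finally show ?thesis .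
qed

lemma jK_lt: "k \<in> K \<Longrightarrow> jK k < n"
proof -
  assume kK: "k \<in> K"
  have "jK k = dK k k + (\<Sum>k'\<in>K - {k}. dK k k')"
    unfolding jK_def using kK finK by (simp add: sum.remove)
  also have "\<dots> = (\<Sum>k'\<in>K - {k}. dK k k')" by (simp add: dK_def)
  also have "\<dots> \<le> (\<Sum>k'\<in>K - {k}. 1)" by (intro sum_mono) (simp add: dK_def)
  also have "\<dots> = n - 1" using kK finK by simp
  finally show ?thesis using n_pos by linarith
qed

lemma first_occ: "x \<in> V \<Longrightarrow> t < m \<Longrightarrow> \<exists>i<L. w ! i = x \<and> cnt w x i = t"
  using cnt_exists[of t w x] unif by auto

lemma jK_inj: "k \<in> K \<Longrightarrow> k' \<in> K \<Longrightarrow> jK k = jK k' \<Longrightarrow> k = k'"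
proof (rule ccontr)
  assume kK: "k \<in> K" and k'K: "k' \<in> K" and eq: "jK k = jK k'" and ne: "k \<noteq> k'"
  obtain i where i: "i < L" "w ! i = k" "cnt w k i = 0" using first_occ[of k 0] m_pos kK KI by auto
  obtain i' where i': "i' < L" "w ! i' = k'" "cnt w k' i' = 0" using first_occ[of k' 0] m_pos k'K KI by auto
  have ki: "kap w K i = jK k" using kap_K[OF kK i(1,2)] i(3) by simp
  have ki': "kap w K i' = jK k'" using kap_K[OF k'K i'(1,2)] i'(3) by simp
  have "i \<noteq> i'" using i i' ne by auto
  then have "i < i' \<or> i' < i" by auto
  then show False
  proof
    assume "i < i'"
    then have "kap w K (Suc i) \<le> kap w K i'" by (intro kap_mono) simp
    then show False using kap_Suc[OF i(1)] i kK ki ki' eq by simp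
  next
    assume "i' < i"
    then have "kap w K (Suc i') \<le> kap w K i" by (intro kap_mono) simp
    then show False using kap_Suc[OF i'(1)] i' k'K ki ki' eq by simp
  qed
qed

lemma pos_K: "i < L \<Longrightarrow> w ! i \<in> K \<Longrightarrow> pos i = real n * real (cnt w (w ! i) i) + real (jK (w ! i))"
  using kap_K[of "w ! i" i] unfolding pos_def by simp

lemma hv_K: "i < L \<Longrightarrow> w ! i \<in> K \<Longrightarrow> hv i = real (jK (w ! i))"
  using pos_K unfolding hv_def by simp

lemma cnt_lt_m: "i < L \<Longrightarrow> cnt w (w ! i) i < m"
  using cnt_occ_lt[of i w "w ! i"] unif occV by auto

lemma pos_hv: "pos i = hv i + real n * real (cnt w (w ! i) i)"
  unfolding hv_def by simp


lemma nm_ineq: "(S::real) + 1 \<le> T + C \<Longrightarrow> N \<ge> 0 \<Longrightarrow> N * S + N \<le> N * T + N * C"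
proof -
  assume a: "S + 1 \<le> T + C" "N \<ge> 0"
  have "N * (S + 1) \<le> N * (T + C)" using mult_left_mono[OF a(1) a(2)] .
  then show ?thesis by (simp add: algebra_simps)
qed

lemma nm_ineq2: "(T::real) + C \<le> S \<Longrightarrow> N \<ge> 0 \<Longrightarrow> N * T + N * C \<le> N * S"
proof -
  assume a: "T + C \<le> S" "N \<ge> 0"
  have "N * (T + C) \<le> N * S" using mult_left_mono[OF a(1) a(2)] .
  then show ?thesis by (simp add: algebra_simps)
qed

lemma order_rel:
  assumes iL: "i < L" and wi: "w ! i = x" and i'L: "i' < L" and wi': "w ! i' = y" and xy: "x \<noteq> y"
    and h1: "hv i < hv i' + real c * real n" and h2: "hv i' + real c * real n < hv i + real n"
  shows "i' < i \<longleftrightarrow> cnt w y i' + 1 \<le> cnt w x i + c"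
proof -
  define t where "t = cnt w x i"
  define s where "s = cnt w y i'"
  have pi: "pos i = hv i + real n * real t" using pos_hv[of i] wi t_def by simp
  have pi': "pos i' = hv i' + real n * real s" using pos_hv[of i'] wi' s_def by simp
  have N: "real n \<ge> 0" by simp
  show ?thesis
  proof (cases "s + 1 \<le> t + c")
    case True
    then have "real s + 1 \<le> real t + real c" by linarith
    from nm_ineq[OF this N] have "pos i' < pos i" using pi pi' h2 by (simp add: algebra_simps)
    then show ?thesis using True pos_less_iff[OF i'L iL] s_def t_def by simp
  next
    case False
    then have "real t + real c \<le> real s" by linarith
    from nm_ineq2[OF this N] have "pos i < pos i'" using pi pi' h1 by (simp add: algebra_simps)
    then show ?thesis using False pos_less_iff[OF iL i'L] s_def t_def by simp
  qed
qed

lemma CNT: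
  assumes xy: "x \<noteq> y" and xV: "x \<in> V" and yV: "y \<in> V" and c1: "c \<le> 1"
    and H: "\<And>i i'. i < L \<Longrightarrow> w ! i = x \<Longrightarrow> i' < L \<Longrightarrow> w ! i' = y \<Longrightarrow>
             hv i < hv i' + real c * real n \<and> hv i' + real c * real n < hv i + real n"
    and iL: "i < L" and wi: "w ! i = x"
  shows "cnt w y i = cnt w x i + c"
proof -
  define t where "t = cnt w x i"
  define s0 where "s0 = cnt w y i"
  have tm: "t < m" using cnt_lt_m[OF iL] wi t_def by simp
  have s0m: "s0 \<le> m" using cnt_le_count[of w y i] unif yV s0_def by simp
  have A: "s0 < m \<Longrightarrow> t + c \<le> s0"
  proof -
    assume "s0 < m"
    then obtain i' where i': "i' < L" "w ! i' = y" "cnt w y i' = s0" using first_occ[OF yV] by blast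
    have "\<not> i' < i"
    proof
      assume "i' < i"
      then have "cnt w y i' < cnt w y i" using occ_less_cnt[OF _ i'(1)] i'(2) by blast
      then show False using i'(3) s0_def by simp
    qed
    moreover have hh: "hv i < hv i' + real c * real n \<and> hv i' + real c * real n < hv i + real n"
      using H[OF iL wi i'(1,2)] .
    ultimately show ?thesis using order_rel[OF iL wi i'(1,2) xy hh[THEN conjunct1] hh[THEN conjunct2]] i'(3) t_def by simp
  qed
  have B: "s0 \<ge> 1 \<Longrightarrow> s0 \<le> t + c"
  proof -
    assume s1: "s0 \<ge> 1"
    then have "s0 - 1 < m" using s0m by simp
    then obtain i' where i': "i' < L" "w ! i' = y" "cnt w y i' = s0 - 1" using first_occ[OF yV] by blast
    have "cnt w y i' < cnt w y i" using i'(3) s0_def s1 by simp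
    then have "i' < i" by (rule cnt_less_imp_less)
    moreover have hh: "hv i < hv i' + real c * real n \<and> hv i' + real c * real n < hv i + real n"
      using H[OF iL wi i'(1,2)] .
    ultimately show ?thesis using order_rel[OF iL wi i'(1,2) xy hh[THEN conjunct1] hh[THEN conjunct2]] i'(3) t_def s1 by simp
  qed
  have "s0 = t + c"
  proof (cases "s0 < m")
    case True
    then show ?thesis using A B by (cases "s0 \<ge> 1") auto
  next
    case False
    then have "s0 = m" using s0m by simp
    then show ?thesis using B m_pos tm c1 by simp
  qed
  then show ?thesis using s0_def t_def by simp
qed

lemma DISJ:
  assumes xy: "x \<noteq> y" and xV: "x \<in> V" and yV: "y \<in> V" and c1: "c \<le> 1"
    and H: "\<And>i i'. i < L \<Longrightarrow> w ! i = x \<Longrightarrow> i' < L \<Longrightarrow> w ! i' = y \<Longrightarrow>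
             hv i < hv i' + real c * real n \<and> hv i' + real c * real n < hv i + real n"
  shows "alternate w x y"
proof -
  have H': "\<And>i i'. i < L \<Longrightarrow> w ! i = y \<Longrightarrow> i' < L \<Longrightarrow> w ! i' = x \<Longrightarrow>
             hv i < hv i' + real (1 - c) * real n \<and> hv i' + real (1 - c) * real n < hv i + real n"
  proof -
    fix i i' assume a: "i < L" "w ! i = y" "i' < L" "w ! i' = x"
    have "real (1 - c) = 1 - real c" using c1 by simp
    then show "hv i < hv i' + real (1 - c) * real n \<and> hv i' + real (1 - c) * real n < hv i + real n"
      using H[OF a(3,4,1,2)] by (simp only: left_diff_distrib) linarith
  qed
  have cx: "\<And>i. i < L \<Longrightarrow> w ! i = x \<Longrightarrow> cnt w y i = cnt w x i + c"
    by (rule CNT[OF xy xV yV c1 H])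
  have cy: "\<And>i. i < L \<Longrightarrow> w ! i = y \<Longrightarrow> cnt w x i = cnt w y i + (1 - c)"
    by (rule CNT[OF xy[symmetric] yV xV _ H']) simp_all
  show ?thesis
  proof (cases "c = 0")
    case True
    have "R1 w x y" unfolding R1_def bal_def
    proof (intro allI impI conjI)
      fix i assume "i < L"
      then show "w ! i = x \<Longrightarrow> int (cnt w x i) - int (cnt w y i) = 0"
        "w ! i = y \<Longrightarrow> int (cnt w x i) - int (cnt w y i) = 1"
        using cx[of i] cy[of i] True \<open>i < L\<close> xy by fastforce+
    qed
    then show ?thesis using alt_R[OF xy] by simp
  next
    case False
    then have "c = 1" using c1 by simp
    have "R2 w x y" unfolding R2_def bal_def
    proof (intro allI impI conjI)
      fix i assume "i < L"
      then show "w ! i = x \<Longrightarrow> int (cnt w x i) - int (cnt w y i) = -1"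
        "w ! i = y \<Longrightarrow> int (cnt w x i) - int (cnt w y i) = 0"
        using cx[of i] cy[of i] \<open>c = 1\<close> \<open>i < L\<close> xy by fastforce+
    qed
    then show ?thesis using alt_R[OF xy] by simp
  qed
qed

end


context UW begin

lemma pos_lt_kocc:
  assumes iL: "i < L" and kK: "k \<in> K" and wik: "w ! i \<noteq> k" and c: "cnt w k i = t" and tm: "t < m"
  shows "pos i < real n * real t + real (jK k)"
proof -
  obtain i' where i': "i' < L" "w ! i' = k" "cnt w k i' = t" using first_occ[of k t] kK KI tm by auto
  have "\<not> i' < i"
  proof
    assume "i' < i"
    then have "cnt w k i' < cnt w k i" using occ_less_cnt[OF _ i'(1)] i'(2) by blast
    then show False using i'(3) c by simp
  qed
  moreover have "i' \<noteq> i" using wik i' by auto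
  ultimately have "i < i'" by simp
  then have "pos i < pos i'" using pos_mono i'(1) by blast
  then show ?thesis using pos_K[OF i'(1)] i' kK by simp
qed

lemma pos_gt_kocc:
  assumes iL: "i < L" and kK: "k \<in> K" and c: "t < cnt w k i"
  shows "real n * real t + real (jK k) < pos i"
proof -
  have tm: "t < m" using c cnt_le_count[of w k i] unif kK KI by fastforce
  obtain i' where i': "i' < L" "w ! i' = k" "cnt w k i' = t" using first_occ[of k t] kK KI tm by auto
  have "i' < i" using cnt_less_imp_less[of w k i' i] i'(3) c by simp
  then have "pos i' < pos i" using pos_mono iL by blast
  then show ?thesis using pos_K[OF i'(1)] i' kK by simp
qed

lemma NB:
  assumes vV: "v \<in> V" and kK: "k \<in> K" and vk: "v \<noteq> k" and alt: "alternate w v k"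
  shows "\<exists>c\<le>1. \<forall>i<L. w ! i = v \<longrightarrow> hv i < real (jK k) + real c * real n \<and> real (jK k) + real c * real n < hv i + real n"
proof -
  have jn: "real (jK k) + 1 \<le> real n" using jK_lt[OF kK] by linarith
  have R: "R1 w v k \<or> R2 w v k" using alt_R[OF vk] alt by simp
  then show ?thesis
  proof
    assume r: "R1 w v k"
    have "\<forall>i<L. w ! i = v \<longrightarrow> hv i < real (jK k) \<and> real (jK k) < hv i + real n"
    proof (intro allI impI)
      fix i assume iL: "i < L" and wi: "w ! i = v"
      define t where "t = cnt w v i"
      have b: "bal w v k i = 0" using r iL wi unfolding R1_def by auto
      then have ck: "cnt w k i = t" unfolding bal_def t_def by simp
      have tm: "t < m" using cnt_lt_m[OF iL] wi t_def by simp
      have ph: "pos i = hv i + real n * real t" using pos_hv[of i] wi t_def by simp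
      have 1: "hv i < real (jK k)" using pos_lt_kocc[OF iL kK _ ck tm] wi vk ph by simp
      have 2: "real (jK k) < hv i + real n"
      proof (cases t)
        case 0
        then show ?thesis using ph pos_bounds[OF iL] jn by simp
      next
        case (Suc t')
        have "real n * real t' + real (jK k) < pos i" using pos_gt_kocc[OF iL kK] ck Suc by simp
        then show ?thesis using ph Suc by (simp add: algebra_simps)
      qed
      show "hv i < real (jK k) \<and> real (jK k) < hv i + real n" using 1 2 by simp
    qed
    then show ?thesis by (intro exI[of _ 0]) simp
  next
    assume r: "R2 w v k"
    have "\<forall>i<L. w ! i = v \<longrightarrow> hv i < real (jK k) + real n \<and> real (jK k) < hv i"
    proof (intro allI impI)
      fix i assume iL: "i < L" and wi: "w ! i = v"
      define t where "t = cnt w v i"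
      have b: "bal w v k i = -1" using r iL wi unfolding R2_def by auto
      then have ck: "cnt w k i = Suc t" unfolding bal_def t_def by simp
      have ph: "pos i = hv i + real n * real t" using pos_hv[of i] wi t_def by simp
      have 1: "real (jK k) < hv i"
        using pos_gt_kocc[OF iL kK, of t] ck ph by simp
      have 2: "hv i < real (jK k) + real n"
      proof (cases "Suc t < m")
        case True
        then show ?thesis using pos_lt_kocc[OF iL kK _ ck True] wi vk ph by (simp add: algebra_simps)
      next
        case False
        have "Suc t \<le> m" using ck cnt_le_count[of w k i] unif kK KI by fastforce
        then have "m = Suc t" using False by simp
        then have "pos i < real n * real t + real n - 1/2" using pos_bounds[OF iL] by (simp add: algebra_simps)
        then show ?thesis using ph by simp
      qed
      show "hv i < real (jK k) + real n \<and> real (jK k) < hv i" using 1 2 by simp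
    qed
    then show ?thesis by (intro exI[of _ 1]) simp
  qed
qed


definition occs :: "'a \<Rightarrow> nat set" where "occs x = {i. i < L \<and> w ! i = x}"
definition Hs :: "'a \<Rightarrow> real set" where "Hs x = hv ` occs x"
definition mu :: "'a \<Rightarrow> real" where "mu x = Min (Hs x)"
definition Mx :: "'a \<Rightarrow> real" where "Mx x = Max (Hs x)"

lemma Hs_fin: "finite (Hs x)" unfolding Hs_def occs_def by simp

lemma Hs_ne: "x \<in> V \<Longrightarrow> Hs x \<noteq> {}"
  using first_occ[of x 0] m_pos unfolding Hs_def occs_def by fastforce

lemma mu_le: "i < L \<Longrightarrow> w ! i = x \<Longrightarrow> mu x \<le> hv i"
  unfolding mu_def Hs_def occs_def by (rule Min_le) auto

lemma Mx_ge: "i < L \<Longrightarrow> w ! i = x \<Longrightarrow> hv i \<le> Mx x"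
  unfolding Mx_def Hs_def occs_def by (rule Max_ge) auto

lemma mu_in: "x \<in> V \<Longrightarrow> \<exists>i<L. w ! i = x \<and> mu x = hv i"
proof -
  assume "x \<in> V"
  then have "mu x \<in> Hs x" unfolding mu_def using Hs_fin Hs_ne by (rule_tac Min_in) auto
  then show ?thesis unfolding Hs_def occs_def by auto
qed

lemma Mx_in: "x \<in> V \<Longrightarrow> \<exists>i<L. w ! i = x \<and> Mx x = hv i"
proof -
  assume "x \<in> V"
  then have "Mx x \<in> Hs x" unfolding Mx_def using Hs_fin Hs_ne by (rule_tac Max_in) auto
  then show ?thesis unfolding Hs_def occs_def by auto
qed

lemma I_V: "v \<in> I \<Longrightarrow> v \<in> V" using KI by auto
lemma I_notK: "v \<in> I \<Longrightarrow> v \<notin> K" using KI by auto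

lemma G1:
  assumes vI: "v \<in> I" and kK: "k \<in> K"
  shows "E v k \<longleftrightarrow> (\<exists>c\<le>(1::nat). Mx v < real (jK k) + real c * real n \<and> real (jK k) + real c * real n < mu v + real n)"
proof -
  have vV: "v \<in> V" using I_V[OF vI] .
  have kV: "k \<in> V" using kK KI by auto
  have vk: "v \<noteq> k" using I_notK[OF vI] kK by auto
  show ?thesis
  proof
    assume "E v k"
    then have "alternate w v k" using E_alt[OF vV kV vk] by simp
    then obtain c where c: "c \<le> 1" and H: "\<forall>i<L. w ! i = v \<longrightarrow> hv i < real (jK k) + real c * real n \<and> real (jK k) + real c * real n < hv i + real n"
      using NB[OF vV kK vk] by blast
    obtain i1 where i1: "i1 < L" "w ! i1 = v" "Mx v = hv i1" using Mx_in[OF vV] by blast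
    obtain i2 where i2: "i2 < L" "w ! i2 = v" "mu v = hv i2" using mu_in[OF vV] by blast
    show "\<exists>c\<le>(1::nat). Mx v < real (jK k) + real c * real n \<and> real (jK k) + real c * real n < mu v + real n"
      using c H i1 i2 by (intro exI[of _ c]) auto
  next
    assume "\<exists>c\<le>(1::nat). Mx v < real (jK k) + real c * real n \<and> real (jK k) + real c * real n < mu v + real n"
    then obtain c where c: "c \<le> 1" "Mx v < real (jK k) + real c * real n" "real (jK k) + real c * real n < mu v + real n"
      by blast
    have "alternate w v k"
    proof (rule DISJ[OF vk vV kV c(1)])
      fix i i' assume a: "i < L" "w ! i = v" "i' < L" "w ! i' = k"
      have "hv i' = real (jK k)" using hv_K[OF a(3)] a(4) kK by simp
      then show "hv i < hv i' + real c * real n \<and> hv i' + real c * real n < hv i + real n"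
        using c Mx_ge[OF a(1,2)] mu_le[OF a(1,2)] by simp
    qed
    then show "E v k" using E_alt[OF vV kV vk] by simp
  qed
qed

lemma Mx_lo: "x \<in> V \<Longrightarrow> -1/2 < Mx x"
proof -
  assume xV: "x \<in> V"
  obtain i where i: "i < L" "w ! i = x" "cnt w x i = 0" using first_occ[OF xV] m_pos by auto
  have "hv i = pos i" unfolding hv_def using i by simp
  then show ?thesis using pos_bounds[OF i(1)] Mx_ge[OF i(1,2)] by simp
qed

lemma mu_hi: "x \<in> V \<Longrightarrow> mu x < real n - 1/2"
proof -
  assume xV: "x \<in> V"
  obtain m' where m': "m = Suc m'" using m_pos by (cases m) auto
  then have "m' < m" by simp
  then obtain i where i: "i < L" "w ! i = x" "cnt w x i = m'" using first_occ[OF xV] by blast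
  have "real (n * m) = real n * real m' + real n" using m' by (simp add: algebra_simps)
  moreover have "hv i = pos i - real n * real m'" unfolding hv_def using i by simp
  ultimately show ?thesis using pos_bounds[OF i(1)] mu_le[OF i(1,2)] by simp
qed

lemma G2:
  assumes uI: "u \<in> I" and vI: "v \<in> I" and uv: "u \<noteq> v"
  shows "\<not> (Mx u < mu v + real_of_int c * real n \<and> Mx v + real_of_int c * real n < mu u + real n)"
proof
  assume a: "Mx u < mu v + real_of_int c * real n \<and> Mx v + real_of_int c * real n < mu u + real n"
  have uV: "u \<in> V" and vV: "v \<in> V" using uI vI KI by auto
  have N: "real n \<ge> 1" using n_pos by simp
  consider "c \<le> -1" | "c = 0" | "c = 1" | "c \<ge> 2" by linarith
  then show False
  proof cases
    case 1
    then have "real_of_int c * real n \<le> -1 * real n"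
      by (intro mult_right_mono) auto
    then show False using a Mx_lo[OF uV] mu_hi[OF vV] by simp
  next
    case 4
    then have "2 * real n \<le> real_of_int c * real n"
      by (intro mult_right_mono) auto
    then show False using a Mx_lo[OF vV] mu_hi[OF uV] by simp
  next
    case 2
    have "alternate w u v"
    proof (rule DISJ[OF uv uV vV, of 0])
      fix i i' assume b: "i < L" "w ! i = u" "i' < L" "w ! i' = v"
      show "hv i < hv i' + real 0 * real n \<and> hv i' + real 0 * real n < hv i + real n"
        using a 2 Mx_ge[OF b(1,2)] mu_le[OF b(1,2)] Mx_ge[OF b(3,4)] mu_le[OF b(3,4)] by simp
    qed simp
    then show False using E_alt[OF uV vV uv] ind uI vI unfolding is_independent_def by blast
  next
    case 3
    have "alternate w u v"
    proof (rule DISJ[OF uv uV vV, of 1])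
      fix i i' assume b: "i < L" "w ! i = u" "i' < L" "w ! i' = v"
      show "hv i < hv i' + real 1 * real n \<and> hv i' + real 1 * real n < hv i + real n"
        using a 3 Mx_ge[OF b(1,2)] mu_le[OF b(1,2)] Mx_ge[OF b(3,4)] mu_le[OF b(3,4)] by simp
    qed simp
    then show False using E_alt[OF uV vV uv] ind uI vI unfolding is_independent_def by blast
  qed
qed


definition noint :: "real \<Rightarrow> bool" where "noint a \<longleftrightarrow> (\<forall>z::int. a \<noteq> of_int z)"

lemma int_small: "\<bar>of_int z :: real\<bar> < 1 \<Longrightarrow> z = 0"
  by simp

lemma hv_frac: "i < L \<Longrightarrow> w ! i \<notin> K \<Longrightarrow> hv i = of_int (int (kap w K i) - 1 - int n * int (cnt w (w ! i) i)) + fr i"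
  unfolding hv_def pos_def by simp

lemma noint_hv: "i < L \<Longrightarrow> w ! i \<notin> K \<Longrightarrow> noint (hv i)"
  unfolding noint_def
proof
  fix z :: int
  assume iL: "i < L" and nK: "w ! i \<notin> K"
  define z0 where "z0 = int (kap w K i) - 1 - int n * int (cnt w (w ! i) i)"
  have h: "hv i = of_int z0 + fr i" using hv_frac[OF iL nK] z0_def by simp
  show "hv i \<noteq> of_int z"
  proof
    assume "hv i = of_int z"
    then have "fr i = of_int (z - z0)" using h by simp
    moreover have "0 < fr i" "fr i < 1" using fr_bounds[OF iL] by auto
    ultimately have "(0::real) < of_int (z - z0)" "of_int (z - z0) < (1::real)" by auto
    then have "0 < z - z0" "z - z0 < 1" by linarith+
    then show False by simp
  qed
qed

lemma noint_diff: "i < L \<Longrightarrow> i' < L \<Longrightarrow> w ! i \<notin> K \<Longrightarrow> w ! i' \<notin> K \<Longrightarrow> i \<noteq> i' \<Longrightarrow> noint (hv i - hv i')"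
  unfolding noint_def
proof
  fix z :: int
  assume iL: "i < L" and i'L: "i' < L" and nK: "w ! i \<notin> K" and nK': "w ! i' \<notin> K" and ne: "i \<noteq> i'"
  define z0 where "z0 = int (kap w K i) - 1 - int n * int (cnt w (w ! i) i)"
  define z1 where "z1 = int (kap w K i') - 1 - int n * int (cnt w (w ! i') i')"
  have h: "hv i = of_int z0 + fr i" using hv_frac[OF iL nK] z0_def by simp
  have h': "hv i' = of_int z1 + fr i'" using hv_frac[OF i'L nK'] z1_def by simp
  show "hv i - hv i' \<noteq> of_int z"
  proof
    assume "hv i - hv i' = of_int z"
    then have e: "fr i - fr i' = of_int (z - z0 + z1)" using h h' by simp
    have "\<bar>fr i - fr i'\<bar> < 1" using fr_bounds[OF iL] fr_bounds[OF i'L] by auto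
    then have "z - z0 + z1 = 0" using e int_small by metis
    then have "fr i = fr i'" using e by simp
    then show False using fr_inj[OF iL i'L] ne by simp
  qed
qed

lemma noint_vals:
  assumes uI: "u \<in> I" and vI: "v \<in> I" and uv: "u \<noteq> v"
    and a: "a = mu u \<or> a = Mx u" and b: "b = mu v \<or> b = Mx v"
  shows "noint (a - b)"
proof -
  have uV: "u \<in> V" and vV: "v \<in> V" using uI vI KI by auto
  obtain i where i: "i < L" "w ! i = u" "a = hv i" using a mu_in[OF uV] Mx_in[OF uV] by metis
  obtain i' where i': "i' < L" "w ! i' = v" "b = hv i'" using b mu_in[OF vV] Mx_in[OF vV] by metis
  have "i \<noteq> i'" using i i' uv by auto
  then show ?thesis using noint_diff[OF i(1) i'(1)] i i' I_notK uI vI by simp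
qed

lemma noint_val:
  assumes uI: "u \<in> I" and a: "a = mu u \<or> a = Mx u"
  shows "noint a"
proof -
  have uV: "u \<in> V" using uI KI by auto
  obtain i where i: "i < L" "w ! i = u" "a = hv i" using a mu_in[OF uV] Mx_in[OF uV] by metis
  then show ?thesis using noint_hv[OF i(1)] I_notK uI by simp
qed

lemma G1int:
  assumes vI: "v \<in> I" and kK: "k \<in> K"
  shows "E v k \<longleftrightarrow> (\<exists>c::int. Mx v < real (jK k) + of_int c * real n \<and> real (jK k) + of_int c * real n < mu v + real n)"
proof -
  have vV: "v \<in> V" using vI KI by auto
  have jn: "real (jK k) + 1 \<le> real n" using jK_lt[OF kK] by linarith
  show ?thesis
  proof
    assume "E v k"
    then obtain c :: nat where "c \<le> 1" "Mx v < real (jK k) + real c * real n" "real (jK k) + real c * real n < mu v + real n"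
      using G1[OF vI kK] by blast
    then show "\<exists>c::int. Mx v < real (jK k) + of_int c * real n \<and> real (jK k) + of_int c * real n < mu v + real n"
      by (intro exI[of _ "int c"]) simp
  next
    assume "\<exists>c::int. Mx v < real (jK k) + of_int c * real n \<and> real (jK k) + of_int c * real n < mu v + real n"
    then obtain c :: int where c: "Mx v < real (jK k) + of_int c * real n" "real (jK k) + of_int c * real n < mu v + real n"
      by blast
    consider "c \<le> -1" | "c = 0" | "c = 1" | "c \<ge> 2" by linarith
    then show "E v k"
    proof cases
      case 1
      then have "of_int c * real n \<le> -1 * real n" by (intro mult_right_mono) auto
      then show ?thesis using c Mx_lo[OF vV] jn by simp
    next
      case 4
      then have "2 * real n \<le> of_int c * real n" by (intro mult_right_mono) auto
      then show ?thesis using c mu_hi[OF vV] by simp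
    next
      case 2
      then show ?thesis using G1[OF vI kK] c by (intro iffD2[OF G1[OF vI kK]] exI[of _ 0]) simp
    next
      case 3
      then show ?thesis using G1[OF vI kK] c by (intro iffD2[OF G1[OF vI kK]] exI[of _ 1]) simp
    qed
  qed
qed

end


definition Qb :: "('a \<Rightarrow> bool) \<Rightarrow> 'a list \<Rightarrow> bool" where
  "Qb P w \<longleftrightarrow> (\<forall>i j. i < j \<longrightarrow> j < length w \<longrightarrow> w!i = w!j \<longrightarrow> P (w!i) \<longrightarrow>
      (\<exists>k. i < k \<and> k < j \<and> P (w!k) \<and> w!k \<noteq> w!i))"

lemma first_P:
  assumes Pz: "P z"
  shows "(\<forall>j<length w. w!j = z \<longrightarrow> (\<exists>k<j. P (w!k) \<and> w!k \<noteq> z)) \<longleftrightarrow> (filter P w = [] \<or> hd (filter P w) \<noteq> z)"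
proof (induction w)
  case Nil
  then show ?case by simp
next
  case (Cons a w)
  show ?case
  proof (cases "P a")
    case True
    show ?thesis
    proof (cases "a = z")
      case True
      have "\<not> (\<forall>j<length (a#w). (a#w)!j = z \<longrightarrow> (\<exists>k<j. P ((a#w)!k) \<and> (a#w)!k \<noteq> z))"
        using True by (auto intro: exI[of _ 0])
      then show ?thesis using True \<open>P a\<close> by simp
    next
      case False
      have "\<forall>j<length (a#w). (a#w)!j = z \<longrightarrow> (\<exists>k<j. P ((a#w)!k) \<and> (a#w)!k \<noteq> z)"
      proof (intro allI impI)
        fix j assume "j < length (a#w)" "(a#w)!j = z"
        then have "j \<noteq> 0" using False by (cases j) auto
        then show "\<exists>k<j. P ((a#w)!k) \<and> (a#w)!k \<noteq> z" using False \<open>P a\<close> by (intro exI[of _ 0]) auto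
      qed
      then show ?thesis using False \<open>P a\<close> by simp
    qed
  next
    case False
    then have az: "a \<noteq> z" using Pz by auto
    have "(\<forall>j<length (a#w). (a#w)!j = z \<longrightarrow> (\<exists>k<j. P ((a#w)!k) \<and> (a#w)!k \<noteq> z))
      \<longleftrightarrow> (\<forall>j<length w. w!j = z \<longrightarrow> (\<exists>k<j. P (w!k) \<and> w!k \<noteq> z))"
    proof
      assume h: "\<forall>j<length (a#w). (a#w)!j = z \<longrightarrow> (\<exists>k<j. P ((a#w)!k) \<and> (a#w)!k \<noteq> z)"
      show "\<forall>j<length w. w!j = z \<longrightarrow> (\<exists>k<j. P (w!k) \<and> w!k \<noteq> z)"
      proof (intro allI impI)
        fix j assume j: "j < length w" "w!j = z"
        then obtain k where k: "k < Suc j" "P ((a#w)!k)" "(a#w)!k \<noteq> z" using h[rule_format, of "Suc j"] by auto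
        then have "k \<noteq> 0" using False by (cases k) auto
        then obtain k' where "k = Suc k'" by (cases k) auto
        then show "\<exists>k<j. P (w!k) \<and> w!k \<noteq> z" using k by auto
      qed
    next
      assume h: "\<forall>j<length w. w!j = z \<longrightarrow> (\<exists>k<j. P (w!k) \<and> w!k \<noteq> z)"
      show "\<forall>j<length (a#w). (a#w)!j = z \<longrightarrow> (\<exists>k<j. P ((a#w)!k) \<and> (a#w)!k \<noteq> z)"
      proof (intro allI impI)
        fix j assume j: "j < length (a#w)" "(a#w)!j = z"
        then have "j \<noteq> 0" using az by (cases j) auto
        then obtain j' where j': "j = Suc j'" by (cases j) auto
        then obtain k where k: "k < j'" "P (w!k)" "w!k \<noteq> z" using h j by auto
        then show "\<exists>k<j. P ((a#w)!k) \<and> (a#w)!k \<noteq> z" using j' by (intro exI[of _ "Suc k"]) auto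
      qed
    qed
    then show ?thesis using Cons False by simp
  qed
qed

lemma Qb_Cons:
  "Qb P (a # w) \<longleftrightarrow> Qb P w \<and> (P a \<longrightarrow> (\<forall>j<length w. w!j = a \<longrightarrow> (\<exists>k<j. P (w!k) \<and> w!k \<noteq> a)))"
proof
  assume h: "Qb P (a # w)"
  have "Qb P w" unfolding Qb_def
  proof (intro allI impI)
    fix i j assume a: "i < j" "j < length w" "w!i = w!j" "P (w!i)"
    then obtain k where k: "Suc i < k" "k < Suc j" "P ((a#w)!k)" "(a#w)!k \<noteq> (a#w)!Suc i"
      using h unfolding Qb_def by (metis Suc_mono length_Cons nth_Cons_Suc)
    then obtain k' where "k = Suc k'" by (cases k) auto
    then show "\<exists>k. i < k \<and> k < j \<and> P (w!k) \<and> w!k \<noteq> w!i" using k by auto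
  qed
  moreover have "P a \<longrightarrow> (\<forall>j<length w. w!j = a \<longrightarrow> (\<exists>k<j. P (w!k) \<and> w!k \<noteq> a))"
  proof (intro impI allI)
    fix j assume Pa: "P a" and j: "j < length w" "w!j = a"
    then obtain k where k: "0 < k" "k < Suc j" "P ((a#w)!k)" "(a#w)!k \<noteq> (a#w)!0"
      using h unfolding Qb_def by (metis length_Cons not_less_eq nth_Cons_0 nth_Cons_Suc zero_less_Suc)
    then obtain k' where "k = Suc k'" by (cases k) auto
    then show "\<exists>k<j. P (w!k) \<and> w!k \<noteq> a" using k by auto
  qed
  ultimately show "Qb P w \<and> (P a \<longrightarrow> (\<forall>j<length w. w!j = a \<longrightarrow> (\<exists>k<j. P (w!k) \<and> w!k \<noteq> a)))" by blast
next
  assume h: "Qb P w \<and> (P a \<longrightarrow> (\<forall>j<length w. w!j = a \<longrightarrow> (\<exists>k<j. P (w!k) \<and> w!k \<noteq> a)))"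
  show "Qb P (a # w)" unfolding Qb_def
  proof (intro allI impI)
    fix i j assume a: "i < j" "j < length (a#w)" "(a#w)!i = (a#w)!j" "P ((a#w)!i)"
    obtain j' where j': "j = Suc j'" using a(1) by (cases j) auto
    show "\<exists>k. i < k \<and> k < j \<and> P ((a#w)!k) \<and> (a#w)!k \<noteq> (a#w)!i"
    proof (cases i)
      case 0
      then have "P a" "w!j' = a" "j' < length w" using a j' by auto
      then obtain k where "k < j'" "P (w!k)" "w!k \<noteq> a" using h by blast
      then show ?thesis using 0 j' by (intro exI[of _ "Suc k"]) auto
    next
      case (Suc i')
      then have "i' < j'" "j' < length w" "w!i' = w!j'" "P (w!i')" using a j' by auto
      then obtain k where "i' < k" "k < j'" "P (w!k)" "w!k \<noteq> w!i'" using h unfolding Qb_def by blast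
      then show ?thesis using Suc j' by (intro exI[of _ "Suc k"]) auto
    qed
  qed
qed

lemma succ_Qb: "successively (\<noteq>) (filter P w) \<longleftrightarrow> Qb P w"
proof (induction w)
  case Nil
  then show ?case by (simp add: Qb_def)
next
  case (Cons a w)
  show ?case
  proof (cases "P a")
    case True
    have e1: "successively (\<noteq>) (filter P (a#w)) \<longleftrightarrow> (filter P w = [] \<or> a \<noteq> hd (filter P w) \<and> successively (\<noteq>) (filter P w))"
      using True by (simp add: successively_Cons)
    have e2: "Qb P (a#w) \<longleftrightarrow> Qb P w \<and> (filter P w = [] \<or> hd (filter P w) \<noteq> a)"
      using Qb_Cons[of P a w] first_P[of P a w] True by simp
    have e3: "filter P w = [] \<Longrightarrow> Qb P w" using Cons.IH by simp
    show ?thesis using e1 e2 e3 Cons.IH by blast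
  next
    case False
    then show ?thesis using Cons by (simp add: Qb_Cons)
  qed
qed

lemma alt_betw: "alternate w x y \<longleftrightarrow> Qb (\<lambda>z. z = x \<or> z = y) w"
  by (simp add: alt_succ succ_Qb)


definition keysOf :: "('k \<times> 'a) list \<Rightarrow> 'a \<Rightarrow> 'k set" where
  "keysOf Ps x = {k. (k, x) \<in> set Ps}"

definition betw :: "'k::linorder set \<Rightarrow> 'k set \<Rightarrow> bool" where
  "betw A B \<longleftrightarrow> (\<forall>a\<in>A. \<forall>a'\<in>A. a < a' \<longrightarrow> (\<exists>b\<in>B. a < b \<and> b < a'))"

definition wordOf :: "('k::linorder \<times> 'a) list \<Rightarrow> 'a list" where
  "wordOf Ps = map snd (sort_key fst Ps)"

lemma wordOf_set: "set (wordOf Ps) = snd ` set Ps"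
  by (simp add: wordOf_def)

lemma wordOf_count: "count_list (wordOf Ps) x = count_list (map snd Ps) x"
proof -
  have "mset (wordOf Ps) = mset (map snd Ps)" by (simp add: wordOf_def)
  then show ?thesis by (rule mset_eq_length_filter)
qed

lemma wordOf_alt:
  fixes Ps :: "('k::linorder \<times> 'a) list"
  assumes dk: "distinct (map fst Ps)" and xy: "x \<noteq> y"
  shows "alternate (wordOf Ps) x y \<longleftrightarrow> betw (keysOf Ps x) (keysOf Ps y) \<and> betw (keysOf Ps y) (keysOf Ps x)"
proof -
  define S where "S = sort_key fst Ps"
  have setS: "set S = set Ps" by (simp add: S_def)
  have lenS: "length S = length Ps" by (simp add: S_def)
  have dS: "distinct (map fst S)"
  proof -
    have "mset (map fst S) = mset (map fst Ps)" by (simp add: S_def)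
    then show ?thesis using dk mset_eq_imp_distinct_iff by blast
  qed
  have sS: "sorted (map fst S)" by (simp add: S_def)
  have strict: "\<And>i j. i < j \<Longrightarrow> j < length S \<Longrightarrow> fst (S!i) < fst (S!j)"
  proof -
    fix i j assume "i < j" "j < length S"
    have "sorted_wrt (<) (map fst S)" using sS dS by (simp add: strict_sorted_iff)
    then have "(map fst S)!i < (map fst S)!j" using \<open>i < j\<close> \<open>j < length S\<close> sorted_wrt_nth_less by fastforce
    then show "fst (S!i) < fst (S!j)" using \<open>i < j\<close> \<open>j < length S\<close> by simp
  qed
  have ord: "\<And>i j. i < length S \<Longrightarrow> j < length S \<Longrightarrow> fst (S!i) < fst (S!j) \<longleftrightarrow> i < j"
  proof -
    fix i j assume a: "i < length S" "j < length S"
    show "fst (S!i) < fst (S!j) \<longleftrightarrow> i < j"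
      using strict[of i j] strict[of j i] a by (cases "i < j"; cases "i = j") auto
  qed
  have w: "wordOf Ps = map snd S" by (simp add: wordOf_def S_def)
  have inS: "\<And>k z. (k, z) \<in> set Ps \<longleftrightarrow> (\<exists>i<length S. S!i = (k, z))"
  proof -
    fix k z show "(k, z) \<in> set Ps \<longleftrightarrow> (\<exists>i<length S. S!i = (k, z))"
      unfolding setS[symmetric] in_set_conv_nth by blast
  qed
  let ?P = "\<lambda>z. z = x \<or> z = y"
  have "Qb ?P (map snd S) \<longleftrightarrow> betw (keysOf Ps x) (keysOf Ps y) \<and> betw (keysOf Ps y) (keysOf Ps x)"
  proof
    assume q: "Qb ?P (map snd S)"
    have gen: "\<And>u v. u \<noteq> v \<Longrightarrow> ?P u \<Longrightarrow> ?P v \<Longrightarrow> betw (keysOf Ps u) (keysOf Ps v)"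
    proof -
      fix u v assume uv: "u \<noteq> v" "?P u" "?P v"
      show "betw (keysOf Ps u) (keysOf Ps v)" unfolding betw_def
      proof (intro ballI impI)
        fix a a' assume a: "a \<in> keysOf Ps u" "a' \<in> keysOf Ps u" "a < a'"
        obtain i where i: "i < length S" "S!i = (a, u)" using a(1) inS unfolding keysOf_def by blast
        obtain j where j: "j < length S" "S!j = (a', u)" using a(2) inS unfolding keysOf_def by blast
        have ij: "i < j" using ord[OF i(1) j(1)] i j a(3) by simp
        have e1: "map snd S ! i = map snd S ! j" using i j by simp
        have e2: "?P (map snd S ! i)" using i uv by simp
        have e3: "j < length (map snd S)" using j by simp
        have "\<exists>k. i < k \<and> k < j \<and> ?P (map snd S ! k) \<and> map snd S ! k \<noteq> map snd S ! i"
          using q ij e3 e1 e2 unfolding Qb_def by presburger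
        then obtain k where k: "i < k" "k < j" "?P (map snd S ! k)" "map snd S ! k \<noteq> map snd S ! i"
          by blast
        have kS: "k < length S" using k j by simp
        have mk: "map snd S ! k = snd (S!k)" using kS by simp
        have mi: "map snd S ! i = u" using i by simp
        have "snd (S!k) = x \<or> snd (S!k) = y" "snd (S!k) \<noteq> u" using k(3,4) mk mi by simp_all
        then have sk: "snd (S!k) = v" using uv by blast
        have "S!k = (fst (S!k), v)" using sk by (cases "S!k") auto
        then have "(fst (S!k), v) \<in> set Ps" using inS kS by blast
        moreover have "fst (S!i) < fst (S!k)" using ord[OF i(1) kS] k(1) by simp
        moreover have "fst (S!k) < fst (S!j)" using ord[OF kS j(1)] k(2) by simp
        moreover have "fst (S!i) = a" "fst (S!j) = a'" using i j by simp_all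
        ultimately show "\<exists>b\<in>keysOf Ps v. a < b \<and> b < a'" unfolding keysOf_def by force
      qed
    qed
    show "betw (keysOf Ps x) (keysOf Ps y) \<and> betw (keysOf Ps y) (keysOf Ps x)"
      using gen[of x y] gen[of y x] xy by auto
  next
    assume b: "betw (keysOf Ps x) (keysOf Ps y) \<and> betw (keysOf Ps y) (keysOf Ps x)"
    show "Qb ?P (map snd S)" unfolding Qb_def
    proof (intro allI impI)
      fix i j assume a: "i < j" "j < length (map snd S)" "map snd S ! i = map snd S ! j" "?P (map snd S ! i)"
      have iS: "i < length S" and jS: "j < length S" using a by auto
      define u where "u = snd (S!i)"
      define v where "v = (if u = x then y else x)"
      have Pu: "?P u" and uv: "u \<noteq> v" and Pv: "?P v" using a(4) iS xy unfolding u_def v_def by auto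
      have bu: "betw (keysOf Ps u) (keysOf Ps v)" using b Pu xy unfolding v_def by auto
      have "S!i = (fst (S!i), u)" unfolding u_def by simp
      then have ki: "fst (S!i) \<in> keysOf Ps u" using inS iS unfolding keysOf_def by blast
      have "snd (S!j) = u" using a(3) iS jS unfolding u_def by simp
      then have "S!j = (fst (S!j), u)" by (cases "S!j") auto
      then have kj: "fst (S!j) \<in> keysOf Ps u" using inS jS unfolding keysOf_def by blast
      have "fst (S!i) < fst (S!j)" using ord[OF iS jS] a(1) by simp
      then obtain bk where bk: "bk \<in> keysOf Ps v" "fst (S!i) < bk" "bk < fst (S!j)"
        using bu ki kj unfolding betw_def by blast
      obtain k where k: "k < length S" "S!k = (bk, v)" using bk(1) inS unfolding keysOf_def by blast
      have "i < k" "k < j" using ord[OF iS k(1)] ord[OF k(1) jS] bk k by auto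
      moreover have "map snd S ! k = v" using k by simp
      moreover have "map snd S ! i = u" using iS u_def by simp
      ultimately show "\<exists>k. i < k \<and> k < j \<and> ?P (map snd S ! k) \<and> map snd S ! k \<noteq> map snd S ! i"
        using Pv uv by (intro exI[of _ k]) simp
    qed
  qed
  then show ?thesis using alt_betw[of "map snd S" x y] w by simp
qed

definition alt3 :: "'k::linorder \<Rightarrow> 'k \<Rightarrow> 'k \<Rightarrow> 'k \<Rightarrow> 'k \<Rightarrow> 'k \<Rightarrow> bool" where
  "alt3 a1 a2 a3 b1 b2 b3 \<longleftrightarrow> (a1<b1 \<and> b1<a2 \<and> a2<b2 \<and> b2<a3 \<and> a3<b3) \<or> (b1<a1 \<and> a1<b2 \<and> b2<a2 \<and> a2<b3 \<and> b3<a3)"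

lemma alt3_sym: "alt3 a1 a2 a3 b1 b2 b3 \<longleftrightarrow> alt3 b1 b2 b3 a1 a2 a3"
  unfolding alt3_def by blast

lemma ALT3_half:
  fixes a1 a2 a3 b1 b2 b3 :: "'k::linorder"
  assumes o: "a1 < a2" "a2 < a3" "b1 < b2" "b2 < b3"
    and d: "a1 \<noteq> b1" "a2 \<noteq> b2" "a3 \<noteq> b3" "a1 \<noteq> b2" "a1 \<noteq> b3" "a2 \<noteq> b1" "a2 \<noteq> b3" "a3 \<noteq> b1" "a3 \<noteq> b2"
    and b: "betw {a1,a2,a3} {b1,b2,b3}" "betw {b1,b2,b3} {a1,a2,a3}"
    and a1b1: "a1 < b1"
  shows "a1<b1 \<and> b1<a2 \<and> a2<b2 \<and> b2<a3 \<and> a3<b3"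
proof -
  obtain x1 where x1: "x1 \<in> {b1,b2,b3}" "a1 < x1" "x1 < a2" using b(1) o unfolding betw_def by blast
  have e1: "b1 < a2" using x1 o by auto
  obtain y1 where y1: "y1 \<in> {a1,a2,a3}" "b1 < y1" "y1 < b2" using b(2) o unfolding betw_def by blast
  have e2: "a2 < b2" using y1 o a1b1 by auto
  obtain x2 where x2: "x2 \<in> {b1,b2,b3}" "a2 < x2" "x2 < a3" using b(1) o unfolding betw_def by blast
  have e3: "b2 < a3" using x2 o e1 by auto
  obtain y2 where y2: "y2 \<in> {a1,a2,a3}" "b2 < y2" "y2 < b3" using b(2) o unfolding betw_def by blast
  have e4: "a3 < b3" using y2 o e2 a1b1 by auto
  show ?thesis using a1b1 e1 e2 e3 e4 by simp
qed

lemma ALT3: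
  fixes a1 a2 a3 b1 b2 b3 :: "'k::linorder"
  assumes o: "a1 < a2" "a2 < a3" "b1 < b2" "b2 < b3"
    and d: "a1 \<noteq> b1" "a2 \<noteq> b2" "a3 \<noteq> b3" "a1 \<noteq> b2" "a1 \<noteq> b3" "a2 \<noteq> b1" "a2 \<noteq> b3" "a3 \<noteq> b1" "a3 \<noteq> b2"
  shows "betw {a1,a2,a3} {b1,b2,b3} \<and> betw {b1,b2,b3} {a1,a2,a3} \<longleftrightarrow> alt3 a1 a2 a3 b1 b2 b3"
proof
  assume b: "betw {a1,a2,a3} {b1,b2,b3} \<and> betw {b1,b2,b3} {a1,a2,a3}"
  show "alt3 a1 a2 a3 b1 b2 b3"
  proof (cases "a1 < b1")
    case True
    then show ?thesis using ALT3_half[OF o d] b unfolding alt3_def by blast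
  next
    case False
    then have "b1 < a1" using d(1) by auto
    then have "b1<a1 \<and> a1<b2 \<and> b2<a2 \<and> a2<b3 \<and> b3<a3"
      using ALT3_half[OF o(3,4,1,2) d(1,2,3)[symmetric] d(6,8,4,9,5,7)[symmetric]] b by blast
    then show ?thesis unfolding alt3_def by blast
  qed
next
  assume "alt3 a1 a2 a3 b1 b2 b3"
  then show "betw {a1,a2,a3} {b1,b2,b3} \<and> betw {b1,b2,b3} {a1,a2,a3}"
    unfolding alt3_def betw_def using o by auto
qed

lemma no_betw: "a \<in> A \<Longrightarrow> a' \<in> A \<Longrightarrow> a < a' \<Longrightarrow> (\<forall>b\<in>B. \<not> (a < b \<and> b < a')) \<Longrightarrow> \<not> betw A B"
  unfolding betw_def by blast

lemma distinct_concat_map: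
  assumes "distinct xs" "\<And>v. v \<in> set xs \<Longrightarrow> distinct (f v)"
    "\<And>v v'. v \<in> set xs \<Longrightarrow> v' \<in> set xs \<Longrightarrow> v \<noteq> v' \<Longrightarrow> set (f v) \<inter> set (f v') = {}"
  shows "distinct (concat (map f xs))"
  using assms
proof (induction xs)
  case Nil
  then show ?case by simp
next
  case (Cons a xs)
  have "set (f a) \<inter> set (concat (map f xs)) = {}"
    using Cons.prems(1,3) by fastforce
  then show ?case using Cons by simp
qed

lemma count_concat3: "count_list (concat (map (\<lambda>v. [v, v, v]) xs)) z = 3 * count_list xs z"
  by (induction xs) auto


context UW begin

lemma noint_add_int: "noint a \<Longrightarrow> noint (a + of_int z)"
  unfolding noint_def
proof
  fix y :: int assume h: "\<forall>z::int. a \<noteq> of_int z"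
  show "a + of_int z \<noteq> of_int y"
  proof
    assume "a + of_int z = of_int y"
    then have "a = of_int (y - z)" by simp
    then show False using h by blast
  qed
qed

lemma noint_shift: "noint a \<Longrightarrow> noint (a + of_int d * real (n::nat))"
proof -
  assume "noint a"
  have "of_int d * real n = of_int (d * int n)" by simp
  then show ?thesis using noint_add_int[OF \<open>noint a\<close>, of "d * int n"] by simp
qed

lemma noint_neq_int: "noint a \<Longrightarrow> a \<noteq> of_int z" unfolding noint_def by blast
lemma noint_neq_nat: "noint a \<Longrightarrow> a \<noteq> real (z::nat)"
  using noint_neq_int[of a "int z"] by simp


definition NI :: "'a set" where "NI = {v\<in>I. \<exists>k\<in>K. E v k}"

lemma NI_I: "v \<in> NI \<Longrightarrow> v \<in> I" unfolding NI_def by auto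

lemma mu_le_Mx: "v \<in> V \<Longrightarrow> mu v \<le> Mx v"
  unfolding mu_def Mx_def using Hs_fin Hs_ne by (meson Max_ge Min_in order_trans Min_le Max_in)

lemma width: "v \<in> NI \<Longrightarrow> Mx v - mu v < real n"
proof -
  assume "v \<in> NI"
  then obtain k where vI: "v \<in> I" and kK: "k \<in> K" and e: "E v k" unfolding NI_def by auto
  obtain c :: int where "Mx v < real (jK k) + of_int c * real n" "real (jK k) + of_int c * real n < mu v + real n"
    using G1int[OF vI kK] e by blast
  then show ?thesis by linarith
qed

definition tA :: "'a \<Rightarrow> bool" where
  "tA v \<longleftrightarrow> (\<exists>d::int. mu v + of_int d * real n < 0 \<and> 0 < Mx v + of_int d * real n)"

definition dd :: "'a \<Rightarrow> int" where
  "dd v = (if tA v then (SOME d::int. mu v + of_int d * real n < 0 \<and> 0 < Mx v + of_int d * real n)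
           else - \<lfloor>mu v / real n\<rfloor>)"

definition mp :: "'a \<Rightarrow> real" where "mp v = mu v + of_int (dd v) * real n"
definition Mp :: "'a \<Rightarrow> real" where "Mp v = Mx v + of_int (dd v) * real n"

lemma Mp_mp: "Mp v - mp v = Mx v - mu v" unfolding Mp_def mp_def by simp

lemma normA:
  assumes vN: "v \<in> NI" and t: "tA v"
  shows "mp v < 0 \<and> 0 < Mp v \<and> - real n < mp v \<and> Mp v < real n"
proof -
  have "mu v + of_int (dd v) * real n < 0 \<and> 0 < Mx v + of_int (dd v) * real n"
    unfolding dd_def using t someI_ex[OF t[unfolded tA_def]] by simp
  then have "mp v < 0" "0 < Mp v" unfolding mp_def Mp_def by auto
  moreover have "Mp v - mp v < real n" using width[OF vN] Mp_mp by simp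
  ultimately show ?thesis by linarith
qed

lemma n_real_pos: "real n > 0" using n_pos by simp

lemma normB:
  assumes vN: "v \<in> NI" and t: "\<not> tA v"
  shows "0 < mp v \<and> mp v \<le> Mp v \<and> Mp v < real n"
proof -
  have vI: "v \<in> I" using NI_I[OF vN] .
  have vV: "v \<in> V" using vI KI by auto
  define q where "q = mu v / real n"
  have N: "real n > 0" by (rule n_real_pos)
  have muq: "mu v = q * real n" unfolding q_def using N by simp
  have d: "dd v = - \<lfloor>q\<rfloor>" unfolding dd_def q_def using t by simp
  have mpq: "mp v = (q - of_int \<lfloor>q\<rfloor>) * real n" unfolding mp_def d muq by (simp add: algebra_simps)
  have f1: "of_int \<lfloor>q\<rfloor> \<le> q" "q < of_int \<lfloor>q\<rfloor> + 1" by linarith+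
  have mp0: "0 \<le> mp v" using mpq f1 N by simp
  have "q - of_int \<lfloor>q\<rfloor> < 1" using f1 by linarith
  then have mpn: "mp v < real n" using mpq N by (simp add: mult_strict_right_mono[of _ 1, simplified])
  have nm: "noint (mu v)" using noint_val[OF vI] by simp
  have nM: "noint (Mx v)" using noint_val[OF vI] by simp
  have "mp v \<noteq> 0"
  proof
    assume "mp v = 0"
    then have "mu v = of_int (- dd v) * real n" unfolding mp_def by simp
    then show False using noint_shift[OF nm, of "dd v"] \<open>mp v = 0\<close> unfolding mp_def noint_def
      by (metis of_int_0)
  qed
  then have p: "0 < mp v" using mp0 by simp
  have le: "mp v \<le> Mp v" using mu_le_Mx[OF vV] unfolding mp_def Mp_def by simp
  have "Mp v < real n"
  proof (rule ccontr)
    assume "\<not> Mp v < real n"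
    moreover have "Mp v \<noteq> real n"
    proof
      assume "Mp v = real n"
      then have "Mx v + of_int (dd v) * real n = of_int (int n)" unfolding Mp_def by simp
      then show False using noint_shift[OF nM, of "dd v"] unfolding noint_def by blast
    qed
    ultimately have gt: "Mp v > real n" by simp
    have "mu v + of_int (dd v - 1) * real n < 0 \<and> 0 < Mx v + of_int (dd v - 1) * real n"
      using gt mpn unfolding mp_def Mp_def by (simp add: algebra_simps)
    then have "tA v" unfolding tA_def by blast
    then show False using t by simp
  qed
  then show ?thesis using p le by simp
qed


lemma mult_ge1: "(c::int) \<ge> 1 \<Longrightarrow> of_int c * real (N::nat) \<ge> real N"
  using mult_right_mono[of 1 "of_int c" "real N"] by simp
lemma mult_ge2: "(c::int) \<ge> 2 \<Longrightarrow> of_int c * real (N::nat) \<ge> 2 * real N"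
  using mult_right_mono[of 2 "of_int c" "real N"] by simp
lemma mult_lem1: "(c::int) \<le> -1 \<Longrightarrow> of_int c * real (N::nat) \<le> - real N"
  using mult_right_mono[of "of_int c" "-1" "real N"] by simp

lemma G1shift:
  assumes vI: "v \<in> I" and kK: "k \<in> K"
  shows "E v k \<longleftrightarrow> (\<exists>c::int. Mp v < real (jK k) + of_int c * real n \<and> real (jK k) + of_int c * real n < mp v + real n)"
proof -
  have "(\<exists>c::int. Mx v < real (jK k) + of_int c * real n \<and> real (jK k) + of_int c * real n < mu v + real n)
    \<longleftrightarrow> (\<exists>c::int. Mp v < real (jK k) + of_int c * real n \<and> real (jK k) + of_int c * real n < mp v + real n)"
  proof
    assume "\<exists>c::int. Mx v < real (jK k) + of_int c * real n \<and> real (jK k) + of_int c * real n < mu v + real n"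
    then obtain c :: int where c: "Mx v < real (jK k) + of_int c * real n" "real (jK k) + of_int c * real n < mu v + real n" by blast
    show "\<exists>c::int. Mp v < real (jK k) + of_int c * real n \<and> real (jK k) + of_int c * real n < mp v + real n"
      using c unfolding Mp_def mp_def by (intro exI[of _ "c + dd v"]) (simp add: algebra_simps)
  next
    assume "\<exists>c::int. Mp v < real (jK k) + of_int c * real n \<and> real (jK k) + of_int c * real n < mp v + real n"
    then obtain c :: int where c: "Mp v < real (jK k) + of_int c * real n" "real (jK k) + of_int c * real n < mp v + real n" by blast
    show "\<exists>c::int. Mx v < real (jK k) + of_int c * real n \<and> real (jK k) + of_int c * real n < mu v + real n"
      using c unfolding Mp_def mp_def by (intro exI[of _ "c - dd v"]) (simp add: algebra_simps)
  qed
  then show ?thesis using G1int[OF vI kK] by simp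
qed

lemma nbA:
  assumes vN: "v \<in> NI" and t: "tA v" and kK: "k \<in> K"
  shows "E v k \<longleftrightarrow> Mp v < real (jK k) \<and> real (jK k) < mp v + real n"
proof -
  have nA: "mp v < 0 \<and> 0 < Mp v \<and> - real n < mp v \<and> Mp v < real n" using normA[OF vN t] .
  have jn: "real (jK k) + 1 \<le> real n" using jK_lt[OF kK] by linarith
  show ?thesis
  proof
    assume "E v k"
    then obtain c :: int where c: "Mp v < real (jK k) + of_int c * real n" "real (jK k) + of_int c * real n < mp v + real n"
      using G1shift[OF NI_I[OF vN] kK] by blast
    consider "c \<le> -1" | "c = 0" | "c \<ge> 1" by linarith
    then show "Mp v < real (jK k) \<and> real (jK k) < mp v + real n"
    proof cases
      case 1 have False using mult_lem1[OF 1, of n] c nA jn by linarith then show ?thesis by simp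
    next
      case 2 then show ?thesis using c by simp
    next
      case 3 have False using mult_ge1[OF 3, of n] c nA jn by linarith then show ?thesis by simp
    qed
  next
    assume "Mp v < real (jK k) \<and> real (jK k) < mp v + real n"
    then show "E v k" using G1shift[OF NI_I[OF vN] kK] by (intro iffD2[OF G1shift[OF NI_I[OF vN] kK]] exI[of _ 0]) simp
  qed
qed

lemma nbB:
  assumes vN: "v \<in> NI" and t: "\<not> tA v" and kK: "k \<in> K"
  shows "E v k \<longleftrightarrow> real (jK k) < mp v \<or> Mp v < real (jK k)"
proof -
  have nB: "0 < mp v \<and> mp v \<le> Mp v \<and> Mp v < real n" using normB[OF vN t] .
  have jn: "real (jK k) + 1 \<le> real n" using jK_lt[OF kK] by linarith
  show ?thesis
  proof
    assume "E v k"
    then obtain c :: int where c: "Mp v < real (jK k) + of_int c * real n" "real (jK k) + of_int c * real n < mp v + real n"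
      using G1shift[OF NI_I[OF vN] kK] by blast
    consider "c \<le> -1" | "c = 0" | "c = 1" | "c \<ge> 2" by linarith
    then show "real (jK k) < mp v \<or> Mp v < real (jK k)"
    proof cases
      case 1 have False using mult_lem1[OF 1, of n] c nB jn by linarith then show ?thesis by simp
    next
      case 2 then show ?thesis using c by simp
    next
      case 3 then show ?thesis using c by simp
    next
      case 4 have False using mult_ge2[OF 4, of n] c nB jn by linarith then show ?thesis by simp
    qed
  next
    assume h: "real (jK k) < mp v \<or> Mp v < real (jK k)"
    show "E v k"
    proof (cases "real (jK k) < mp v")
      case True
      then show ?thesis using nB jn by (intro iffD2[OF G1shift[OF NI_I[OF vN] kK]] exI[of _ 1]) simp
    next
      case False
      then have "Mp v < real (jK k)" using h by simp
      then show ?thesis using nB jn by (intro iffD2[OF G1shift[OF NI_I[OF vN] kK]] exI[of _ 0]) simp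
    qed
  qed
qed

lemma PairN:
  assumes uN: "u \<in> NI" and vN: "v \<in> NI" and uv: "u \<noteq> v"
  shows "\<not> (Mp u < mp v + of_int c * real n \<and> Mp v + of_int c * real n < mp u + real n)"
  using G2[OF NI_I[OF uN] NI_I[OF vN] uv, of "c + dd v - dd u"] unfolding Mp_def mp_def
  by (simp add: algebra_simps)

lemma noint_mp: "v \<in> I \<Longrightarrow> noint (mp v)"
  unfolding mp_def using noint_shift noint_val by blast
lemma noint_Mp: "v \<in> I \<Longrightarrow> noint (Mp v)"
  unfolding Mp_def using noint_shift noint_val by blast

lemma noint_pair:
  assumes uI: "u \<in> I" and vI: "v \<in> I" and uv: "u \<noteq> v"
    and a: "a = mp u \<or> a = Mp u" and b: "b = mp v \<or> b = Mp v"
  shows "noint (a - b)"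
proof -
  obtain a0 where a0: "a0 = mu u \<or> a0 = Mx u" "a = a0 + of_int (dd u) * real n"
    using a unfolding mp_def Mp_def by blast
  obtain b0 where b0: "b0 = mu v \<or> b0 = Mx v" "b = b0 + of_int (dd v) * real n"
    using b unfolding mp_def Mp_def by blast
  have "a - b = (a0 - b0) + of_int (dd u - dd v) * real n" using a0 b0 by (simp add: algebra_simps)
  then show ?thesis using noint_shift[OF noint_vals[OF uI vI uv a0(1) b0(1)], of "dd u - dd v"] by simp
qed

lemma noint_ne: "noint (a - b) \<Longrightarrow> a \<noteq> b + of_int z"
  unfolding noint_def by (metis add_diff_cancel_left')

definition NA :: "'a set" where "NA = {v\<in>NI. tA v}"
definition NB :: "'a set" where "NB = {v\<in>NI. \<not> tA v}"

lemma finNI: "finite NI" unfolding NI_def using finV KI by (metis (no_types, lifting) Un_upper2 finite_subset mem_Collect_eq subsetI)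
lemma finNA: "finite NA" unfolding NA_def using finNI by simp
lemma finNB: "finite NB" unfolding NB_def using finNI by simp

definition c0 :: real where "c0 = Max (mp ` NB)"

lemma c0_facts:
  assumes vB: "v \<in> NB"
  shows "mp v \<le> c0 \<and> c0 \<le> Mp v \<and> noint c0 \<and> 0 < c0 \<and> c0 < real n"
proof -
  have ne: "mp ` NB \<noteq> {}" using vB by auto
  obtain u where u: "u \<in> NB" "c0 = mp u" unfolding c0_def using Max_in[OF _ ne] finNB by auto
  have uN: "u \<in> NI" "\<not> tA u" and vN: "v \<in> NI" "\<not> tA v" using u vB unfolding NB_def by auto
  have le: "mp v \<le> c0" unfolding c0_def using vB finNB by simp
  have "c0 \<le> Mp v"
  proof (cases "u = v")
    case True
    then show ?thesis using u normB[OF vN] by simp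
  next
    case False
    have "\<not> (Mp v < mp u + of_int 0 * real n \<and> Mp u + of_int 0 * real n < mp v + real n)"
      using PairN[OF vN(1) uN(1)] False by blast
    moreover have "Mp u < mp v + real n" using normB[OF uN] normB[OF vN] by simp
    ultimately show ?thesis using u by simp
  qed
  moreover have "noint c0" using u noint_mp NI_I uN by simp
  moreover have "0 < c0 \<and> c0 < real n" using u normB[OF uN] by simp
  ultimately show ?thesis using le by simp
qed

definition rA :: "'a \<Rightarrow> nat" where "rA v = Suc (card {u\<in>NA. Mp u > Mp v})"
definition rB :: "'a \<Rightarrow> nat" where "rB v = card {u\<in>NB. mp u > mp v}"

lemma rA_mono: "u \<in> NA \<Longrightarrow> v \<in> NA \<Longrightarrow> Mp u < Mp v \<Longrightarrow> rA v < rA u"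
proof -
  assume u: "u \<in> NA" and v: "v \<in> NA" and lt: "Mp u < Mp v"
  have "{x\<in>NA. Mp x > Mp v} < {x\<in>NA. Mp x > Mp u}" using u v lt by auto
  then have "card {x\<in>NA. Mp x > Mp v} < card {x\<in>NA. Mp x > Mp u}"
    by (rule psubset_card_mono[rotated]) (simp add: finNA)
  then show ?thesis unfolding rA_def by simp
qed

lemma rB_mono: "u \<in> NB \<Longrightarrow> v \<in> NB \<Longrightarrow> mp u < mp v \<Longrightarrow> rB v < rB u"
proof -
  assume u: "u \<in> NB" and v: "v \<in> NB" and lt: "mp u < mp v"
  have "{x\<in>NB. mp x > mp v} < {x\<in>NB. mp x > mp u}" using u v lt by auto
  then have "card {x\<in>NB. mp x > mp v} < card {x\<in>NB. mp x > mp u}"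
    by (rule psubset_card_mono[rotated]) (simp add: finNB)
  then show ?thesis unfolding rB_def by simp
qed

end


context UW begin

definition ix :: "'a \<Rightarrow> nat" where "ix = (SOME f. inj_on f V)"

lemma ix_inj: "inj_on ix V"
proof -
  obtain f :: "'a \<Rightarrow> nat" and N where "inj_on f V" using finite_imp_inj_to_nat_seg[OF finV] by blast
  then show ?thesis unfolding ix_def by (rule someI[where P = "\<lambda>f. inj_on f V"])
qed

definition kk :: "'a \<Rightarrow> nat \<Rightarrow> real \<times> nat" where
  "kk v t = (if v \<in> K then (real (jK v) + real t * real n, 0)
    else if v \<in> NI then
      (if tA v then (if t = 0 then (Mp v, 0) else if t = 1 then (real n, rA v) else (2 * real n + mp v, 0))
       else (if t = 0 then (mp v, 0) else if t = 1 then (real n + Mp v, 0) else (2 * real n + c0, rB v)))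
    else (3 * real n + real (ix v), t))"

lemma V_cases: "v \<in> V \<Longrightarrow> v \<in> K \<or> v \<in> NA \<or> v \<in> NB \<or> (v \<in> I \<and> v \<notin> NI)"
  using KI unfolding NA_def NB_def by auto

lemma NA_I: "v \<in> NA \<Longrightarrow> v \<in> NI \<and> tA v \<and> v \<in> I \<and> v \<notin> K"
  unfolding NA_def using NI_I I_notK by auto
lemma NB_I: "v \<in> NB \<Longrightarrow> v \<in> NI \<and> \<not> tA v \<and> v \<in> I \<and> v \<notin> K"
  unfolding NB_def using NI_I I_notK by auto
lemma O_I: "v \<in> I \<Longrightarrow> v \<notin> NI \<Longrightarrow> v \<notin> K" using I_notK by auto

lemma kkK: "v \<in> K \<Longrightarrow> kk v t = (real (jK v) + real t * real n, 0)" unfolding kk_def by simp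
lemma kkA: "v \<in> NA \<Longrightarrow> kk v 0 = (Mp v, 0) \<and> kk v 1 = (real n, rA v) \<and> kk v 2 = (2 * real n + mp v, 0)"
  using NA_I[of v] unfolding kk_def by simp
lemma kkB: "v \<in> NB \<Longrightarrow> kk v 0 = (mp v, 0) \<and> kk v 1 = (real n + Mp v, 0) \<and> kk v 2 = (2 * real n + c0, rB v)"
  using NB_I[of v] unfolding kk_def by simp
lemma kkO: "v \<in> I \<Longrightarrow> v \<notin> NI \<Longrightarrow> kk v t = (3 * real n + real (ix v), t)"
  using O_I[of v] unfolding kk_def by simp

lemma NA_facts: "v \<in> NA \<Longrightarrow> mp v < 0 \<and> 0 < Mp v \<and> - real n < mp v \<and> Mp v < real n"
  using normA NA_I by blast
lemma NB_facts: "v \<in> NB \<Longrightarrow> 0 < mp v \<and> mp v \<le> Mp v \<and> Mp v < real n"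
  using normB NB_I by blast

lemma rA_pos: "rA v \<ge> 1" unfolding rA_def by simp

lemma kk_mono: "v \<in> V \<Longrightarrow> kk v 0 < kk v 1 \<and> kk v 1 < kk v 2"
proof -
  assume vV: "v \<in> V"
  have N: "real n > 0" by (rule n_real_pos)
  consider "v \<in> K" | "v \<in> NA" | "v \<in> NB" | "v \<in> I \<and> v \<notin> NI" using V_cases[OF vV] by blast
  then show ?thesis
  proof cases
    case 1 then show ?thesis using kkK[OF 1] N by simp
  next
    case 2 then show ?thesis using kkA[OF 2] NA_facts[OF 2] by simp
  next
    case 3 then show ?thesis using kkB[OF 3] NB_facts[OF 3] c0_facts[OF 3] by simp
  next
    case 4 then show ?thesis using kkO[of v] by simp
  qed
qed


lemma kkK': "v \<in> K \<Longrightarrow> kk v t = (real (jK v + t * n), 0)" using kkK by simp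

lemma noint_nat_shift: "noint a \<Longrightarrow> \<forall>z::nat. a + real (c * n) \<noteq> real z"
proof (intro allI)
  fix z :: nat assume "noint a"
  then have "noint (a + of_int (int (c * n)))" by (rule noint_add_int)
  then show "a + real (c * n) \<noteq> real z" using noint_neq_nat by simp
qed

lemma ni_facts:
  assumes vI: "v \<in> I"
  shows "\<forall>z::nat. Mp v \<noteq> real z" "\<forall>z::nat. mp v \<noteq> real z"
    "\<forall>z::nat. 2 * real n + mp v \<noteq> real z" "\<forall>z::nat. real n + Mp v \<noteq> real z"
proof -
  show "\<forall>z::nat. Mp v \<noteq> real z" using noint_neq_nat noint_Mp[OF vI] by blast
  show "\<forall>z::nat. mp v \<noteq> real z" using noint_neq_nat noint_mp[OF vI] by blast
  show "\<forall>z::nat. 2 * real n + mp v \<noteq> real z" using noint_nat_shift[OF noint_mp[OF vI], of 2] by (simp add: add.commute)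
  show "\<forall>z::nat. real n + Mp v \<noteq> real z" using noint_nat_shift[OF noint_Mp[OF vI], of 1] by (simp add: add.commute)
qed

lemma c0_nat: "v \<in> NB \<Longrightarrow> \<forall>z::nat. 2 * real n + c0 \<noteq> real z"
  using noint_nat_shift[of c0 2] c0_facts by (simp add: add.commute)

lemma pair_facts:
  assumes uI: "u \<in> I" and vI: "v \<in> I" and uv: "u \<noteq> v"
  shows "Mp u \<noteq> Mp v" "mp u \<noteq> mp v" "Mp u \<noteq> mp v" "real n + mp u \<noteq> Mp v"
proof -
  have n1: "noint (Mp u - Mp v)" by (rule noint_pair[OF uI vI uv]) simp_all
  have n2: "noint (mp u - mp v)" by (rule noint_pair[OF uI vI uv]) simp_all
  have n3: "noint (Mp u - mp v)" by (rule noint_pair[OF uI vI uv]) simp_all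
  have n4: "noint (mp u - Mp v)" by (rule noint_pair[OF uI vI uv]) simp_all
  show "Mp u \<noteq> Mp v" using noint_ne[OF n1, of 0] by simp
  show "mp u \<noteq> mp v" using noint_ne[OF n2, of 0] by simp
  show "Mp u \<noteq> mp v" using noint_ne[OF n3, of 0] by simp
  show "real n + mp u \<noteq> Mp v" using noint_ne[OF n4, of "- int n"] by auto
qed

lemma less3: "t < 3 \<Longrightarrow> t = 0 \<or> t = 1 \<or> t = (2::nat)" by auto

lemma inj_KK:
  assumes a: "a \<in> K" "b \<in> K" "a \<noteq> b" and t: "t < 3" "t' < 3"
  shows "kk a t \<noteq> kk b t'"
proof
  assume e: "kk a t = kk b t'"
  have "fst (kk a t) = fst (kk b t')" using e by simp
  then have "real (jK a + t * n) = real (jK b + t' * n)" by (simp only: kkK'[OF a(1)] kkK'[OF a(2)] fst_conv)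
  then have "jK a + t * n = jK b + t' * n" by (simp only: of_nat_eq_iff)
  then have "(jK a + t * n) mod n = (jK b + t' * n) mod n" by simp
  then have "jK a = jK b" using jK_lt[OF a(1)] jK_lt[OF a(2)] by simp
  then show False using jK_inj[OF a(1,2)] a(3) by simp
qed

lemma inj_KX:
  assumes a: "a \<in> K" "b \<in> V" "b \<notin> K" and t: "t < 3" "t' < 3"
  shows "kk a t \<noteq> kk b t'"
proof -
  have N: "real n > 0" by (rule n_real_pos)
  have tt: "t' = 0 \<or> t' = 1 \<or> t' = 2" using t by auto
  have "t * n \<le> 2 * n" using t by (intro mult_le_mono1) simp
  then have jl: "jK a + t * n < 3 * n" using jK_lt[OF a(1)] by linarith
  consider "b \<in> NA" | "b \<in> NB" | "b \<in> I \<and> b \<notin> NI" using V_cases[OF a(2)] a(3) by blast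
  then show ?thesis
  proof cases
    case 1
    have bI: "b \<in> I" using NA_I[OF 1] by simp
    have f: "Mp b \<noteq> real (jK a + t * n)" "2 * real n + mp b \<noteq> real (jK a + t * n)"
      using ni_facts[OF bI] by blast+
    show ?thesis using kkK'[OF a(1)] kkA[OF 1] f rA_pos[of b] tt by auto
  next
    case 2
    have bI: "b \<in> I" using NB_I[OF 2] by simp
    have f: "mp b \<noteq> real (jK a + t * n)" "real n + Mp b \<noteq> real (jK a + t * n)"
      "2 * real n + c0 \<noteq> real (jK a + t * n)"
      using ni_facts[OF bI] c0_nat[OF 2] by blast+
    show ?thesis using kkK'[OF a(1)] kkB[OF 2] f tt by auto
  next
    case 3
    have "real (jK a + t * n) < 3 * real n" using jl by linarith
    then show ?thesis using kkK'[OF a(1)] kkO[of b t'] 3 by auto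
  qed
qed

lemma inj_OX:
  assumes a: "a \<in> I" "a \<notin> NI" "b \<in> V" "b \<notin> K" "a \<noteq> b" and t: "t < 3" "t' < 3"
  shows "kk a t \<noteq> kk b t'"
proof -
  have N: "real n > 0" by (rule n_real_pos)
  have tt: "t' = 0 \<or> t' = 1 \<or> t' = 2" using t by auto
  consider "b \<in> NA" | "b \<in> NB" | "b \<in> I \<and> b \<notin> NI" using V_cases[OF a(3)] a(4) by blast
  then show ?thesis
  proof cases
    case 1
    show ?thesis using kkO[OF a(1,2)] kkA[OF 1] NA_facts[OF 1] N tt by auto
  next
    case 2
    show ?thesis using kkO[OF a(1,2)] kkB[OF 2] NB_facts[OF 2] c0_facts[OF 2] N tt by auto
  next
    case 3
    have "ix a \<noteq> ix b" using ix_inj a KI 3 unfolding inj_on_def by auto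
    then show ?thesis using kkO[OF a(1,2)] kkO[of b] 3 by auto
  qed
qed

lemma inj_AA:
  assumes a: "a \<in> NA" "b \<in> NA" "a \<noteq> b" and t: "t < 3" "t' < 3"
  shows "kk a t \<noteq> kk b t'"
proof -
  have tt: "t = 0 \<or> t = 1 \<or> t = 2" "t' = 0 \<or> t' = 1 \<or> t' = 2" using t by auto
  have aI: "a \<in> I" and bI: "b \<in> I" using NA_I a by auto
  note pf = pair_facts[OF aI bI a(3)]
  have "rA a \<noteq> rA b" using rA_mono[OF a(1,2)] rA_mono[OF a(2,1)] pf(1) by fastforce
  then show ?thesis
    using kkA[OF a(1)] kkA[OF a(2)] NA_facts[OF a(1)] NA_facts[OF a(2)] pf tt by auto
qed

lemma inj_BB:
  assumes a: "a \<in> NB" "b \<in> NB" "a \<noteq> b" and t: "t < 3" "t' < 3"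
  shows "kk a t \<noteq> kk b t'"
proof -
  have tt: "t = 0 \<or> t = 1 \<or> t = 2" "t' = 0 \<or> t' = 1 \<or> t' = 2" using t by auto
  have aI: "a \<in> I" and bI: "b \<in> I" using NB_I a by auto
  note pf = pair_facts[OF aI bI a(3)]
  have "rB a \<noteq> rB b" using rB_mono[OF a(1,2)] rB_mono[OF a(2,1)] pf(2) by fastforce
  then show ?thesis
    using kkB[OF a(1)] kkB[OF a(2)] NB_facts[OF a(1)] NB_facts[OF a(2)] c0_facts[OF a(1)] pf tt by auto
qed

lemma inj_AB:
  assumes a: "a \<in> NA" "b \<in> NB" and t: "t < 3" "t' < 3"
  shows "kk a t \<noteq> kk b t'"
proof -
  have tt: "t = 0 \<or> t = 1 \<or> t = 2" "t' = 0 \<or> t' = 1 \<or> t' = 2" using t by auto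
  have aI: "a \<in> I" and bI: "b \<in> I" using NA_I NB_I a by auto
  have ab: "a \<noteq> b" using a NA_I NB_I by auto
  note pf = pair_facts[OF aI bI ab]
  show ?thesis
    using kkA[OF a(1)] kkB[OF a(2)] NA_facts[OF a(1)] NB_facts[OF a(2)] c0_facts[OF a(2)] pf tt by auto
qed

lemma kk_inj:
  assumes uV: "u \<in> V" and vV: "v \<in> V" and uv: "u \<noteq> v" and t: "t < 3" and t': "t' < 3"
  shows "kk u t \<noteq> kk v t'"
proof -
  consider "u \<in> K" | "u \<in> NA" | "u \<in> NB" | "u \<in> I \<and> u \<notin> NI" using V_cases[OF uV] by blast
  then show ?thesis
  proof cases
    case 1
    show ?thesis
    proof (cases "v \<in> K")
      case True then show ?thesis using inj_KK[OF 1 True uv t t'] by blast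
    next
      case False then show ?thesis using inj_KX[OF 1 vV False t t'] by blast
    qed
  next
    case 2
    have uI: "u \<in> I" "u \<notin> K" using NA_I[OF 2] by auto
    consider "v \<in> K" | "v \<in> NA" | "v \<in> NB" | "v \<in> I \<and> v \<notin> NI" using V_cases[OF vV] by blast
    then show ?thesis
    proof cases
      case 1 then show ?thesis using inj_KX[OF 1 uV uI(2) t' t] by metis
    next
      case 3 then show ?thesis using inj_AB[OF \<open>u \<in> NA\<close> 3 t t'] by blast
    next
      case 4 then show ?thesis using inj_OX[of v u t' t] uV uI uv t t' by metis
    qed (use inj_AA[OF \<open>u \<in> NA\<close> _ uv t t'] in blast)
  next
    case 3
    have uI: "u \<in> I" "u \<notin> K" using NB_I[OF 3] by auto
    consider "v \<in> K" | "v \<in> NA" | "v \<in> NB" | "v \<in> I \<and> v \<notin> NI" using V_cases[OF vV] by blast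
    then show ?thesis
    proof cases
      case 1 then show ?thesis using inj_KX[OF 1 uV uI(2) t' t] by metis
    next
      case 2 then show ?thesis using inj_AB[OF 2 \<open>u \<in> NB\<close> t' t] by metis
    next
      case 4 then show ?thesis using inj_OX[of v u t' t] uV uI uv t t' by metis
    qed (use inj_BB[OF \<open>u \<in> NB\<close> _ uv t t'] in blast)
  next
    case 4
    have uK: "u \<notin> K" using O_I 4 by auto
    show ?thesis
    proof (cases "v \<in> K")
      case True then show ?thesis using inj_KX[OF True uV uK t' t] by metis
    next
      case False then show ?thesis using inj_OX[of u v t t'] 4 vV uv t t' by blast
    qed
  qed
qed

end


context UW begin

definition Vl :: "'a list" where "Vl = (SOME xs. set xs = V \<and> distinct xs)"

lemma Vl: "set Vl = V \<and> distinct Vl"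
  unfolding Vl_def using finite_distinct_list[OF finV] by (rule someI_ex)

definition Ps :: "((real \<times> nat) \<times> 'a) list" where
  "Ps = concat (map (\<lambda>v. [(kk v 0, v), (kk v 1, v), (kk v 2, v)]) Vl)"

definition w3 :: "'a list" where "w3 = wordOf Ps"

lemma set_Ps: "set Ps = (\<Union>v\<in>V. {(kk v 0, v), (kk v 1, v), (kk v 2, v)})"
  unfolding Ps_def using Vl by auto

lemma keys: "v \<in> V \<Longrightarrow> keysOf Ps v = {kk v 0, kk v 1, kk v 2}"
  unfolding keysOf_def set_Ps by auto

lemma dk: "distinct (map fst Ps)"
proof -
  have "map fst Ps = concat (map (\<lambda>v. [kk v 0, kk v 1, kk v 2]) Vl)"
    unfolding Ps_def by (simp add: map_concat comp_def)
  moreover have "distinct (concat (map (\<lambda>v. [kk v 0, kk v 1, kk v 2]) Vl))"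
  proof (rule distinct_concat_map)
    show "distinct Vl" using Vl by simp
  next
    fix v assume "v \<in> set Vl"
    then have "v \<in> V" using Vl by simp
    then show "distinct [kk v 0, kk v 1, kk v 2]" using kk_mono[of v] by auto
  next
    fix v v' assume "v \<in> set Vl" "v' \<in> set Vl" "v \<noteq> v'"
    then have a: "v \<in> V" "v' \<in> V" "v \<noteq> v'" using Vl by auto
    show "set [kk v 0, kk v 1, kk v 2] \<inter> set [kk v' 0, kk v' 1, kk v' 2] = {}"
      using kk_inj[OF a, of 0 0] kk_inj[OF a, of 0 1] kk_inj[OF a, of 0 2]
        kk_inj[OF a, of 1 0] kk_inj[OF a, of 1 1] kk_inj[OF a, of 1 2]
        kk_inj[OF a, of 2 0] kk_inj[OF a, of 2 1] kk_inj[OF a, of 2 2] by auto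
  qed
  ultimately show ?thesis by simp
qed

lemma set_w3: "set w3 = V"
proof
  show "set w3 \<subseteq> V" unfolding w3_def wordOf_set set_Ps by auto
  show "V \<subseteq> set w3"
  proof
    fix x assume xV: "x \<in> V"
    have "(kk x 0, x) \<in> set Ps" unfolding set_Ps using xV by auto
    then have "x \<in> snd ` set Ps" by (rule image_eqI[rotated]) simp
    then show "x \<in> set w3" unfolding w3_def wordOf_set .
  qed
qed

lemma count_w3: "v \<in> V \<Longrightarrow> count_list w3 v = 3"
proof -
  assume vV: "v \<in> V"
  have "map snd Ps = concat (map (\<lambda>v. [v, v, v]) Vl)"
    unfolding Ps_def by (simp add: map_concat comp_def)
  then have "count_list w3 v = 3 * count_list Vl v" unfolding w3_def wordOf_count by (simp add: count_concat3)
  also have "count_list Vl v = 1" using count_distinct[of Vl v] Vl vV by simp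
  finally show ?thesis by simp
qed

lemma alt_w3:
  assumes aV: "a \<in> V" and bV: "b \<in> V" and ab: "a \<noteq> b"
  shows "alternate w3 a b \<longleftrightarrow> alt3 (kk a 0) (kk a 1) (kk a 2) (kk b 0) (kk b 1) (kk b 2)"
proof -
  have "alternate w3 a b \<longleftrightarrow> betw {kk a 0, kk a 1, kk a 2} {kk b 0, kk b 1, kk b 2} \<and> betw {kk b 0, kk b 1, kk b 2} {kk a 0, kk a 1, kk a 2}"
    unfolding w3_def using wordOf_alt[OF dk ab] keys[OF aV] keys[OF bV] by simp
  also have "\<dots> \<longleftrightarrow> alt3 (kk a 0) (kk a 1) (kk a 2) (kk b 0) (kk b 1) (kk b 2)"
    by (rule ALT3) (use kk_mono[OF aV] kk_mono[OF bV] kk_inj[OF aV bV ab, of 0 0] kk_inj[OF aV bV ab, of 0 1] kk_inj[OF aV bV ab, of 0 2]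
        kk_inj[OF aV bV ab, of 1 0] kk_inj[OF aV bV ab, of 1 1] kk_inj[OF aV bV ab, of 1 2]
        kk_inj[OF aV bV ab, of 2 0] kk_inj[OF aV bV ab, of 2 1] kk_inj[OF aV bV ab, of 2 2] in auto)
  finally show ?thesis .
qed

end


context UW begin

lemma E_sym: "E a b \<longleftrightarrow> E b a"
  using sg unfolding simple_graph_def by blast

lemma alt3_O:
  assumes a: "a \<in> I" "a \<notin> NI"
  shows "\<not> alt3 (kk a 0) (kk a 1) (kk a 2) b1 b2 b3"
proof
  assume h: "alt3 (kk a 0) (kk a 1) (kk a 2) b1 b2 b3"
  define x where "x = 3 * real n + real (ix a)"
  have k: "kk a 0 = (x, 0)" "kk a 1 = (x, 1)" using kkO[OF a] x_def by auto
  have nb: "\<And>y :: real \<times> nat. \<not> ((x, 0) < y \<and> y < (x, 1))"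
  proof
    fix y :: "real \<times> nat" assume "(x, 0) < y \<and> y < (x, 1)"
    then show False by (cases y) auto
  qed
  from h show False unfolding alt3_def using nb k by metis
qed

lemma E_O: "a \<in> I \<Longrightarrow> a \<notin> NI \<Longrightarrow> b \<in> V \<Longrightarrow> \<not> E a b"
proof
  assume a: "a \<in> I" "a \<notin> NI" "b \<in> V" and e: "E a b"
  show False
  proof (cases "b \<in> K")
    case True
    then show False using a e unfolding NI_def by auto
  next
    case False
    then have "b \<in> I" using a KI by auto
    then show False using ind a e unfolding is_independent_def by blast
  qed
qed

lemma case_KK:
  assumes a: "a \<in> K" "b \<in> K" "a \<noteq> b"
  shows "alt3 (kk a 0) (kk a 1) (kk a 2) (kk b 0) (kk b 1) (kk b 2)"
proof -
  have ne: "jK a \<noteq> jK b" using jK_inj[OF a(1,2)] a(3) by auto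
  have ja: "real (jK a) + 1 \<le> real n" and jb: "real (jK b) + 1 \<le> real n"
    using jK_lt[OF a(1)] jK_lt[OF a(2)] by linarith+
  show ?thesis
  proof (cases "jK a < jK b")
    case True
    then have "real (jK a) < real (jK b)" by simp
    then show ?thesis unfolding alt3_def using kkK[OF a(1)] kkK[OF a(2)] ja jb by auto
  next
    case False
    then have "real (jK b) < real (jK a)" using ne by simp
    then show ?thesis unfolding alt3_def using kkK[OF a(1)] kkK[OF a(2)] ja jb by auto
  qed
qed

lemma case_KA:
  assumes k: "k \<in> K" and v: "v \<in> NA"
  shows "E v k \<longleftrightarrow> alt3 (kk v 0) (kk v 1) (kk v 2) (kk k 0) (kk k 1) (kk k 2)"
proof -
  have vN: "v \<in> NI" "tA v" using NA_I[OF v] by auto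
  have j: "real (jK k) + 1 \<le> real n" using jK_lt[OF k] by linarith
  have r: "rA v \<ge> 1" by (rule rA_pos)
  show ?thesis unfolding nbA[OF vN k] alt3_def using kkK[OF k] kkA[OF v] NA_facts[OF v] j r by auto
qed

lemma case_KB:
  assumes k: "k \<in> K" and v: "v \<in> NB"
  shows "E v k \<longleftrightarrow> alt3 (kk v 0) (kk v 1) (kk v 2) (kk k 0) (kk k 1) (kk k 2)"
proof -
  have vN: "v \<in> NI" "\<not> tA v" using NB_I[OF v] by auto
  have j: "real (jK k) + 1 \<le> real n" using jK_lt[OF k] by linarith
  show ?thesis unfolding nbB[OF vN k] alt3_def using kkK[OF k] kkB[OF v] NB_facts[OF v] c0_facts[OF v] j by auto
qed

lemma case_AA:
  assumes u: "u \<in> NA" and v: "v \<in> NA" and uv: "u \<noteq> v"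
  shows "\<not> alt3 (kk u 0) (kk u 1) (kk u 2) (kk v 0) (kk v 1) (kk v 2)"
proof
  assume h: "alt3 (kk u 0) (kk u 1) (kk u 2) (kk v 0) (kk v 1) (kk v 2)"
  have m1: "Mp u < Mp v \<Longrightarrow> rA v < rA u" using rA_mono[OF u v] by simp
  have m2: "Mp v < Mp u \<Longrightarrow> rA u < rA v" using rA_mono[OF v u] by simp
  from h show False unfolding alt3_def using kkA[OF u] kkA[OF v] m1 m2 by auto
qed

lemma case_BB:
  assumes u: "u \<in> NB" and v: "v \<in> NB" and uv: "u \<noteq> v"
  shows "\<not> alt3 (kk u 0) (kk u 1) (kk u 2) (kk v 0) (kk v 1) (kk v 2)"
proof
  assume h: "alt3 (kk u 0) (kk u 1) (kk u 2) (kk v 0) (kk v 1) (kk v 2)"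
  have m1: "mp u < mp v \<Longrightarrow> rB v < rB u" using rB_mono[OF u v] by simp
  have m2: "mp v < mp u \<Longrightarrow> rB u < rB v" using rB_mono[OF v u] by simp
  from h show False unfolding alt3_def using kkB[OF u] kkB[OF v] m1 m2 by auto
qed

lemma case_AB:
  assumes u: "u \<in> NA" and v: "v \<in> NB"
  shows "\<not> alt3 (kk u 0) (kk u 1) (kk u 2) (kk v 0) (kk v 1) (kk v 2)"
proof
  assume h: "alt3 (kk u 0) (kk u 1) (kk u 2) (kk v 0) (kk v 1) (kk v 2)"
  have uv: "u \<noteq> v" using u v NA_I NB_I by auto
  have p: "\<not> (Mp u < mp v + of_int 0 * real n \<and> Mp v + of_int 0 * real n < mp u + real n)"
    using PairN[OF NA_I[OF u, THEN conjunct1] NB_I[OF v, THEN conjunct1] uv] by blast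
  from h show False unfolding alt3_def using kkA[OF u] kkB[OF v] NA_facts[OF u] NB_facts[OF v] c0_facts[OF v] p by auto
qed

lemma rep_w3: "represents w3 V E"
  unfolding represents_def
proof (intro conjI ballI impI)
  show "set w3 = V" by (rule set_w3)
next
  fix a b assume aV: "a \<in> V" and bV: "b \<in> V" and ab: "a \<noteq> b"
  have sym: "alternate w3 a b \<longleftrightarrow> alt3 (kk b 0) (kk b 1) (kk b 2) (kk a 0) (kk a 1) (kk a 2)"
    using alt_w3[OF aV bV ab] alt3_sym by blast
  note alt = alt_w3[OF aV bV ab]
  consider "a \<in> K" | "a \<in> NA" | "a \<in> NB" | "a \<in> I \<and> a \<notin> NI" using V_cases[OF aV] by blast
  then show "E a b \<longleftrightarrow> alternate w3 a b"
  proof cases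
    case 1
    consider "b \<in> K" | "b \<in> NA" | "b \<in> NB" | "b \<in> I \<and> b \<notin> NI" using V_cases[OF bV] by blast
    then show ?thesis
    proof cases
      case 1 then show ?thesis using alt case_KK[OF \<open>a \<in> K\<close> 1 ab] cl \<open>a \<in> K\<close> ab unfolding is_clique_def by blast
    next
      case 2 then show ?thesis using sym case_KA[OF \<open>a \<in> K\<close> 2] E_sym by blast
    next
      case 3 then show ?thesis using sym case_KB[OF \<open>a \<in> K\<close> 3] E_sym by blast
    next
      case 4 then show ?thesis using sym alt3_O[of b] E_O[of b a] aV E_sym by blast
    qed
  next
    case 2
    consider "b \<in> K" | "b \<in> NA" | "b \<in> NB" | "b \<in> I \<and> b \<notin> NI" using V_cases[OF bV] by blast
    then show ?thesis
    proof cases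
      case 1 then show ?thesis using alt case_KA[OF 1 \<open>a \<in> NA\<close>] by blast
    next
      case 2 then show ?thesis using alt case_AA[OF \<open>a \<in> NA\<close> 2 ab] ind NA_I[OF \<open>a \<in> NA\<close>] NA_I[OF 2] unfolding is_independent_def by blast
    next
      case 3 then show ?thesis using alt case_AB[OF \<open>a \<in> NA\<close> 3] ind NA_I[OF \<open>a \<in> NA\<close>] NB_I[OF 3] unfolding is_independent_def by blast
    next
      case 4 then show ?thesis using sym alt3_O[of b] E_O[of b a] aV E_sym by blast
    qed
  next
    case 3
    consider "b \<in> K" | "b \<in> NA" | "b \<in> NB" | "b \<in> I \<and> b \<notin> NI" using V_cases[OF bV] by blast
    then show ?thesis
    proof cases
      case 1 then show ?thesis using alt case_KB[OF 1 \<open>a \<in> NB\<close>] by blast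
    next
      case 2 then show ?thesis using sym case_AB[OF 2 \<open>a \<in> NB\<close>] ind NA_I[OF 2] NB_I[OF \<open>a \<in> NB\<close>] unfolding is_independent_def by blast
    next
      case 3 then show ?thesis using alt case_BB[OF \<open>a \<in> NB\<close> 3 ab] ind NB_I[OF \<open>a \<in> NB\<close>] NB_I[OF 3] unfolding is_independent_def by blast
    next
      case 4 then show ?thesis using sym alt3_O[of b] E_O[of b a] aV E_sym by blast
    qed
  next
    case 4
    then show ?thesis using alt alt3_O[of a] E_O[of a b] bV by blast
  qed
qed

lemma unif_w3: "uniform 3 w3"
  unfolding uniform_def using count_w3 set_w3 by simp

end


lemma exists_3rep:
  assumes sg: "simple_graph V E" and sp: "split_graph V E" and wr: "word_representable V E"
  shows "\<exists>w. uniform 3 w \<and> represents w V E"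
proof (cases "V = {}")
  case True
  then show ?thesis by (intro exI[of _ "[]"]) (simp add: uniform_def represents_def)
next
  case False
  obtain w0 where w0: "represents w0 V E" using wr unfolding word_representable_def by blast
  obtain w where w: "represents w V E" "\<forall>z\<in>V. count_list w z = length w0"
    using uniformize[OF w0] by blast
  obtain K0 I0 where KI0: "K0 \<union> I0 = V" "K0 \<inter> I0 = {}" "is_clique E K0" "is_independent E I0"
    using sp unfolding split_graph_def by blast
  obtain K I where KI: "K \<union> I = V" "K \<inter> I = {}" "is_clique E K" "is_independent E I" "K \<noteq> {}"
  proof (cases "K0 = {}")
    case True
    obtain v0 where v0: "v0 \<in> V" using False by auto
    have "{v0} \<union> (V - {v0}) = V" "{v0} \<inter> (V - {v0}) = {}" using v0 by auto
    moreover have "is_clique E {v0}" unfolding is_clique_def by simp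
    moreover have "is_independent E (V - {v0})" using KI0 True unfolding is_independent_def by auto
    ultimately show ?thesis using that[of "{v0}" "V - {v0}"] by blast
  next
    case False
    then show ?thesis using that KI0 by blast
  qed
  interpret U: UW w V E K I "length w0"
    by (unfold_locales) (use w sg KI in auto)
  show ?thesis using U.unif_w3 U.rep_w3 by blast
qed

theorem theorem5:
  fixes V :: "'a set" and E :: "'a \<Rightarrow> 'a \<Rightarrow> bool"
  assumes "simple_graph V E"
    and "split_graph V E"
    and "word_representable V E"
  shows "representation_number V E \<le> 3"
proof -
  obtain w where "uniform 3 w \<and> represents w V E" using exists_3rep[OF assms] by blast
  then show ?thesis unfolding representation_number_def by (intro Least_le) blast
qed


end
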